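(* Let $G$ and $H$ be two vertex-disjoint directed co-graphs. Then $\mathrm{tw}(\mathrm{un}(G\oslash H))>\mathrm{dtw}(G\oslash H)$.
   Context: Digraphs are finite, without loops or multiple arcs. Operations on vertex-disjoint digraphs $G_1,\ldots,G_k$: disjoint union $\oplus$ (union of vertex and arc sets); series composition $\otimes$ (disjoint union plus all arcs in both directions between vertices of different $G_i$); order composition $G_1\oslash\cdots\oslash G_k$ (disjoint union plus all arcs from vertices of $G_i$ to vertices of $G_j$ for $i<j$). Directed co-graphs: single-vertex digraphs, and closure under these three operations. $\mathrm{un}(G)$ is the underlying undirected graph of $G$ and $\mathrm{tw}$ is undirected tree-width. Directed tree-width: for $Z\subseteq V$, $S\subseteq V$ is $Z$-normal if no directed walk in $G-Z$ with first and last vertex in $S$ uses a vertex of $G-(Z\cup S)$. A directed tree-decomposition is $(T,\mathcal{X},\mathcal{W})$ with $T=(V_T,E_T)$ an out-tree (rooted, arcs directed away from root; $u\le v$ means a directed path of $\ge0$ arcs from $u$ to $v$), $\mathcal{X}=\{X_e:e\in E_T\}$, $\mathcal{W}=\{W_r:r\in V_T\}$ subsets of $V$, such that $\mathcal{W}$ partitions $V$ into nonempty sets and for each $(u,v)\in E_T$ the set $\bigcup\{W_r: v\le r\}$ is $X_{(u,v)}$-normal; width $\max_r|W_r\cup\bigcup_{e\sim r}X_e|-1$ ($e\sim r$: $r$ is an end of $e$); $\mathrm{dtw}(G)$ is the minimum width. *)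

theory Defs
  imports Main
begin

text \<open>A digraph is a pair (vertex set, arc set). Well-formedness (finite, no loops,
arcs between vertices) is guaranteed for directed co-graphs by construction.\<close>

type_synonym 'a digraph = "'a set \<times> ('a \<times> 'a) set"

definition verts :: "'a digraph \<Rightarrow> 'a set" where "verts G = fst G"
definition arcs :: "'a digraph \<Rightarrow> ('a \<times> 'a) set" where "arcs G = snd G"

definition vdisjoint :: "'a digraph \<Rightarrow> 'a digraph \<Rightarrow> bool" where
  "vdisjoint G H \<longleftrightarrow> verts G \<inter> verts H = {}"

text \<open>disjoint union, series composition, order composition (binary versions;
the k-ary operations are iterations of these, as they are associative)\<close>

definition disj_union :: "'a digraph \<Rightarrow> 'a digraph \<Rightarrow> 'a digraph" where
  "disj_union G H = (verts G \<union> verts H, arcs G \<union> arcs H)"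

definition series_comp :: "'a digraph \<Rightarrow> 'a digraph \<Rightarrow> 'a digraph" where
  "series_comp G H = (verts G \<union> verts H,
     arcs G \<union> arcs H \<union> (verts G \<times> verts H) \<union> (verts H \<times> verts G))"

definition order_comp :: "'a digraph \<Rightarrow> 'a digraph \<Rightarrow> 'a digraph" where
  "order_comp G H = (verts G \<union> verts H, arcs G \<union> arcs H \<union> (verts G \<times> verts H))"

inductive dcograph :: "'a digraph \<Rightarrow> bool" where
  single: "dcograph ({v}, {})"
| union: "dcograph G \<Longrightarrow> dcograph H \<Longrightarrow> vdisjoint G H \<Longrightarrow> dcograph (disj_union G H)"
| series: "dcograph G \<Longrightarrow> dcograph H \<Longrightarrow> vdisjoint G H \<Longrightarrow> dcograph (series_comp G H)"
| order: "dcograph G \<Longrightarrow> dcograph H \<Longrightarrow> vdisjoint G H \<Longrightarrow> dcograph (order_comp G H)"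

type_synonym 'a ugraph = "'a set \<times> 'a set set"

definition un :: "'a digraph \<Rightarrow> 'a ugraph" where
  "un G = (verts G, {{u, v} | u v. (u, v) \<in> arcs G})"

definition tedge :: "'b set set \<Rightarrow> ('b \<times> 'b) set" where
  "tedge ET = {(x, y). {x, y} \<in> ET}"

definition utree :: "nat set \<Rightarrow> nat set set \<Rightarrow> bool" where
  "utree N ET \<longleftrightarrow> finite N \<and> N \<noteq> {}
     \<and> ET \<subseteq> {{x, y} | x y. x \<in> N \<and> y \<in> N \<and> x \<noteq> y}
     \<and> (\<forall>x\<in>N. \<forall>y\<in>N. (x, y) \<in> (tedge ET)\<^sup>*)
     \<and> card ET + 1 = card N"

definition connected_in :: "nat set set \<Rightarrow> nat set \<Rightarrow> bool" where
  "connected_in ET S \<longleftrightarrow> (\<forall>x\<in>S. \<forall>y\<in>S. (x, y) \<in> (tedge ET \<inter> S \<times> S)\<^sup>*)"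

definition tree_decomp :: "'a ugraph \<Rightarrow> nat set \<Rightarrow> nat set set \<Rightarrow> (nat \<Rightarrow> 'a set) \<Rightarrow> bool" where
  "tree_decomp G N ET \<beta> \<longleftrightarrow> utree N ET
     \<and> (\<forall>t\<in>N. \<beta> t \<subseteq> fst G)
     \<and> (\<forall>v\<in>fst G. \<exists>t\<in>N. v \<in> \<beta> t)
     \<and> (\<forall>e\<in>snd G. \<exists>t\<in>N. e \<subseteq> \<beta> t)
     \<and> (\<forall>v\<in>fst G. connected_in ET {t \<in> N. v \<in> \<beta> t})"

definition td_width :: "nat set \<Rightarrow> (nat \<Rightarrow> 'a set) \<Rightarrow> nat" where
  "td_width N \<beta> = Max ((\<lambda>t. card (\<beta> t)) ` N) - 1"

definition tw :: "'a ugraph \<Rightarrow> nat" where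
  "tw G = (LEAST w. \<exists>N ET \<beta>. tree_decomp G N ET \<beta> \<and> td_width N \<beta> = w)"

definition dwalk :: "'a digraph \<Rightarrow> 'a list \<Rightarrow> bool" where
  "dwalk G ws \<longleftrightarrow> ws \<noteq> [] \<and> set ws \<subseteq> verts G
     \<and> (\<forall>i. Suc i < length ws \<longrightarrow> (ws ! i, ws ! Suc i) \<in> arcs G)"

definition del_verts :: "'a digraph \<Rightarrow> 'a set \<Rightarrow> 'a digraph" where
  "del_verts G Z = (verts G - Z, {(u, v) \<in> arcs G. u \<notin> Z \<and> v \<notin> Z})"

definition normal :: "'a digraph \<Rightarrow> 'a set \<Rightarrow> 'a set \<Rightarrow> bool" where
  "normal G Z S \<longleftrightarrow> (\<forall>ws. dwalk (del_verts G Z) ws \<and> hd ws \<in> S \<and> last ws \<in> S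
      \<longrightarrow> set ws \<inter> (verts G - (Z \<union> S)) = {})"

definition out_tree :: "nat set \<Rightarrow> (nat \<times> nat) set \<Rightarrow> nat \<Rightarrow> bool" where
  "out_tree VT ET r \<longleftrightarrow> finite VT \<and> r \<in> VT \<and> ET \<subseteq> VT \<times> VT
     \<and> (\<forall>u. (u, r) \<notin> ET)
     \<and> (\<forall>v\<in>VT. v \<noteq> r \<longrightarrow> (\<exists>!u. (u, v) \<in> ET))
     \<and> (\<forall>v\<in>VT. (r, v) \<in> ET\<^sup>*)"

definition dtree_decomp :: "'a digraph \<Rightarrow> nat set \<Rightarrow> (nat \<times> nat) set \<Rightarrow> nat
     \<Rightarrow> (nat \<times> nat \<Rightarrow> 'a set) \<Rightarrow> (nat \<Rightarrow> 'a set) \<Rightarrow> bool" where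
  "dtree_decomp G VT ET r X W \<longleftrightarrow> out_tree VT ET r
     \<and> (\<forall>e\<in>ET. X e \<subseteq> verts G)
     \<and> (\<forall>t\<in>VT. W t \<noteq> {} \<and> W t \<subseteq> verts G)
     \<and> (\<forall>s\<in>VT. \<forall>t\<in>VT. s \<noteq> t \<longrightarrow> W s \<inter> W t = {})
     \<and> (\<Union>t\<in>VT. W t) = verts G
     \<and> (\<forall>(u, v)\<in>ET. normal G (X (u, v)) (\<Union>t\<in>{t \<in> VT. (v, t) \<in> ET\<^sup>*}. W t))"

definition dtd_width :: "nat set \<Rightarrow> (nat \<times> nat) set \<Rightarrow> (nat \<times> nat \<Rightarrow> 'a set) \<Rightarrow> (nat \<Rightarrow> 'a set) \<Rightarrow> nat" where
  "dtd_width VT ET X W =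
     Max ((\<lambda>t. card (W t \<union> (\<Union>e\<in>{e \<in> ET. fst e = t \<or> snd e = t}. X e))) ` VT) - 1"

definition dtw :: "'a digraph \<Rightarrow> nat" where
  "dtw G = (LEAST w. \<exists>VT ET r X W. dtree_decomp G VT ET r X W \<and> dtd_width VT ET X W = w)"

end

theory Submission
  imports Defs
begin


lemma shortcut:
  assumes l1: "\<forall>z. (l,z)\<in>R \<longrightarrow> z = p" and l2: "\<forall>z. (z,l)\<in>R \<longrightarrow> z = p"
    and pl: "p \<noteq> l" and path: "(x,y) \<in> R\<^sup>*" and xl: "x \<noteq> l"
  shows "(y \<noteq> l \<longrightarrow> (x,y) \<in> (R \<inter> (-{l}) \<times> (-{l}))\<^sup>*) \<and> (y = l \<longrightarrow> (x,p) \<in> (R \<inter> (-{l}) \<times> (-{l}))\<^sup>*)"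
  using path
proof (induction rule: rtrancl_induct)
  case base
  then show ?case using xl by auto
next
  case (step y z)
  show ?case
  proof (cases "z = l")
    case True
    then have "y = p" using l2 step.hyps(2) by auto
    then show ?thesis using step.IH pl True by auto
  next
    case False
    show ?thesis
    proof (cases "y = l")
      case True
      then have "z = p" using l1 step.hyps(2) by auto
      then show ?thesis using step.IH True False by auto
    next
      case False2: False
      then have "(y,z) \<in> R \<inter> (-{l}) \<times> (-{l})" using step.hyps(2) False by auto
      then show ?thesis using step.IH False2 False by (meson rtrancl.rtrancl_into_rtrancl)
    qed
  qed
qed

lemma utree_finite_ET: "utree N ET \<Longrightarrow> finite ET"
proof -
  assume u: "utree N ET"
  have "ET \<subseteq> Pow N" using u unfolding utree_def by auto
  moreover have "finite N" using u unfolding utree_def by auto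
  ultimately show ?thesis by (meson finite_Pow_iff finite_subset)
qed

lemma utree_edge: "utree N ET \<Longrightarrow> e \<in> ET \<Longrightarrow> \<exists>x y. e = {x,y} \<and> x \<in> N \<and> y \<in> N \<and> x \<noteq> y"
  unfolding utree_def by blast

lemma utree_card_e: "utree N ET \<Longrightarrow> e \<in> ET \<Longrightarrow> card e = 2 \<and> e \<subseteq> N"
  using utree_edge by fastforce

lemma leaf_exists:
  assumes u: "utree N ET" and c: "2 \<le> card N"
  shows "\<exists>l p. l \<in> N \<and> p \<in> N \<and> l \<noteq> p \<and> {l,p} \<in> ET \<and> (\<forall>e\<in>ET. l \<in> e \<longrightarrow> e = {l,p})"
proof -
  have fN: "finite N" using u unfolding utree_def by auto
  have fE: "finite ET" using utree_finite_ET[OF u] .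
  define deg where "deg x = card {e\<in>ET. x \<in> e}" for x
  have "(\<Sum>x\<in>N. deg x) = (\<Sum>x\<in>N. \<Sum>e\<in>ET. if x \<in> e then 1 else 0)"
    unfolding deg_def by (simp add: sum.inter_filter[OF fE, symmetric])
  also have "\<dots> = (\<Sum>e\<in>ET. \<Sum>x\<in>N. if x \<in> e then 1 else 0)"
    by (rule sum.swap)
  also have "\<dots> = (\<Sum>e\<in>ET. card {x\<in>N. x \<in> e})"
    by (simp add: sum.inter_filter[OF fN, symmetric])
  also have "\<dots> = (\<Sum>e\<in>ET. 2)"
  proof (rule sum.cong)
    fix e assume "e \<in> ET"
    then have "card e = 2" "e \<subseteq> N" using utree_card_e[OF u] by auto
    moreover have "{x\<in>N. x \<in> e} = e" using \<open>e \<subseteq> N\<close> by auto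
    ultimately show "card {x\<in>N. x \<in> e} = 2" by simp
  qed simp
  also have "\<dots> = 2 * card ET" by simp
  finally have sumdeg: "(\<Sum>x\<in>N. deg x) = 2 * card ET" .
  have cE: "card ET + 1 = card N" using u unfolding utree_def by auto
  have "\<exists>l\<in>N. deg l < 2"
  proof (rule ccontr)
    assume "\<not> ?thesis"
    then have "\<forall>x\<in>N. 2 \<le> deg x" by auto
    then have "(\<Sum>x\<in>N. (2::nat)) \<le> (\<Sum>x\<in>N. deg x)" by (intro sum_mono) auto
    then show False using sumdeg cE by simp
  qed
  then obtain l where lN: "l \<in> N" and dl: "deg l < 2" by auto
  have "\<not> N \<subseteq> {l}"
  proof
    assume "N \<subseteq> {l}"
    then have "N = {l}" using lN by blast
    then show False using c by simp
  qed
  then obtain y where yN: "y \<in> N" and yl: "y \<noteq> l" by auto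
  have "(l,y) \<in> (tedge ET)\<^sup>*" using u lN yN unfolding utree_def by auto
  then obtain z where "(l,z) \<in> tedge ET" using yl by (metis converse_rtranclE)
  then have lz: "{l,z} \<in> ET" unfolding tedge_def by auto
  then obtain a b where ab: "{l,z} = {a,b}" "a \<noteq> b" "a \<in> N" "b \<in> N" using utree_edge[OF u lz] by blast
  then have zl: "z \<noteq> l" and zN: "z \<in> N" by (auto simp: doubleton_eq_iff)
  have sub: "{e\<in>ET. l \<in> e} \<subseteq> {{l,z}}"
  proof
    fix e assume e: "e \<in> {e\<in>ET. l \<in> e}"
    have fin: "finite {e\<in>ET. l \<in> e}" using fE by auto
    have lzS: "{l,z} \<in> {e\<in>ET. l \<in> e}" using lz by auto
    have c1: "card {e\<in>ET. l \<in> e} \<le> Suc 0" using dl unfolding deg_def by simp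
    have "\<forall>a\<in>{e\<in>ET. l \<in> e}. \<forall>b\<in>{e\<in>ET. l \<in> e}. a = b"
      using iffD1[OF card_le_Suc0_iff_eq[OF fin] c1] .
    then have "e = {l,z}" using e lzS by (elim ballE) auto
    then show "e \<in> {{l,z}}" by (rule ssubst) (rule singletonI)
  qed
  have all: "\<forall>e\<in>ET. l \<in> e \<longrightarrow> e = {l,z}"
  proof (intro ballI impI)
    fix e assume "e \<in> ET" "l \<in> e"
    then have "e \<in> {e\<in>ET. l \<in> e}" by (rule CollectI[of _ e, OF conjI])
    then show "e = {l,z}" using sub by (rule subsetD[THEN singletonD, rotated])
  qed
  have lz': "l \<noteq> z" using zl by (rule not_sym)
  show ?thesis
    apply (rule exI[of _ l], rule exI[of _ z])
    apply (intro conjI)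
    apply (rule lN)
    apply (rule zN)
    apply (rule lz')
    apply (rule lz)
    apply (rule all)
    done
qed



lemma tedge_leaf:
  assumes all: "\<forall>e\<in>ET. l \<in> e \<longrightarrow> e = {l,p}" and lp: "l \<noteq> p"
  shows "(l,z) \<in> tedge ET \<Longrightarrow> z = p" and "(z,l) \<in> tedge ET \<Longrightarrow> z = p"
proof -
  assume "(l,z) \<in> tedge ET"
  then have "{l,z} \<in> ET" unfolding tedge_def by simp
  then have "{l,z} = {l,p}" using all by simp
  then show "z = p" using lp by (simp add: doubleton_eq_iff)
next
  assume "(z,l) \<in> tedge ET"
  then have "{z,l} \<in> ET" unfolding tedge_def by simp
  then have "{z,l} = {l,p}" using all by simp
  then show "z = p" using lp by (simp add: doubleton_eq_iff)
qed

lemma restr_sub: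
  assumes all: "\<forall>e\<in>ET. l \<in> e \<longrightarrow> e = {l,p}"
  shows "tedge ET \<inter> S \<times> S \<inter> (-{l}) \<times> (-{l}) \<subseteq> tedge (ET - {{l,p}}) \<inter> (S - {l}) \<times> (S - {l})"
proof
  fix x assume x: "x \<in> tedge ET \<inter> S \<times> S \<inter> (-{l}) \<times> (-{l})"
  obtain a b where xab: "x = (a,b)" by (cases x)
  have "{a,b} \<in> ET" "a \<noteq> l" "b \<noteq> l" "a \<in> S" "b \<in> S" using x xab unfolding tedge_def by auto
  moreover have "{a,b} \<noteq> {l,p}" using \<open>a \<noteq> l\<close> \<open>b \<noteq> l\<close> by (simp add: doubleton_eq_iff)
  ultimately show "x \<in> tedge (ET - {{l,p}}) \<inter> (S - {l}) \<times> (S - {l})" using xab unfolding tedge_def by simp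
qed

lemma utree_remove_leaf:
  assumes u: "utree N ET" and lN: "l \<in> N" and pN: "p \<in> N" and lp: "l \<noteq> p"
    and lpE: "{l,p} \<in> ET" and all: "\<forall>e\<in>ET. l \<in> e \<longrightarrow> e = {l,p}"
  shows "utree (N - {l}) (ET - {{l,p}})"
proof -
  have fN: "finite N" using u unfolding utree_def by auto
  have fE: "finite ET" using utree_finite_ET[OF u] .
  have edges: "ET - {{l,p}} \<subseteq> {{x, y} | x y. x \<in> N - {l} \<and> y \<in> N - {l} \<and> x \<noteq> y}"
  proof
    fix e assume e: "e \<in> ET - {{l,p}}"
    then obtain x y where xy: "e = {x,y}" "x \<in> N" "y \<in> N" "x \<noteq> y" using utree_edge[OF u] by blast
    have "l \<notin> e" using e all by blast
    then show "e \<in> {{x, y} | x y. x \<in> N - {l} \<and> y \<in> N - {l} \<and> x \<noteq> y}" using xy by blast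
  qed
  have conn: "\<forall>x\<in>N - {l}. \<forall>y\<in>N - {l}. (x, y) \<in> (tedge (ET - {{l,p}}))\<^sup>*"
  proof (intro ballI)
    fix x y assume x: "x \<in> N - {l}" and y: "y \<in> N - {l}"
    have "(x,y) \<in> (tedge ET \<inter> N \<times> N)\<^sup>*"
    proof -
      have "(x,y) \<in> (tedge ET)\<^sup>*" using u x y unfolding utree_def by auto
      moreover have "tedge ET = tedge ET \<inter> N \<times> N"
      proof -
        have "tedge ET \<subseteq> N \<times> N"
        proof
          fix q assume "q \<in> tedge ET"
          then obtain a b where q: "q = (a,b)" "{a,b} \<in> ET" unfolding tedge_def by auto
          then have "{a,b} \<subseteq> N" using utree_card_e[OF u] by blast
          then show "q \<in> N \<times> N" using q by simp
        qed
        then show ?thesis by blast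
      qed
      ultimately show ?thesis by simp
    qed
    then have "(x,y) \<in> (tedge ET \<inter> N \<times> N \<inter> (-{l}) \<times> (-{l}))\<^sup>*"
      using shortcut[of l "tedge ET \<inter> N \<times> N" p x y] tedge_leaf[OF all lp] lp x y by blast
    then have "(x,y) \<in> (tedge (ET - {{l,p}}) \<inter> (N - {l}) \<times> (N - {l}))\<^sup>*"
      using rtrancl_mono[OF restr_sub[OF all, of N]] by blast
    then show "(x,y) \<in> (tedge (ET - {{l,p}}))\<^sup>*" using rtrancl_mono[of "tedge (ET - {{l,p}}) \<inter> (N - {l}) \<times> (N - {l})" "tedge (ET - {{l,p}})"] by blast
  qed
  have "card (ET - {{l,p}}) = card ET - 1" using lpE fE by simp
  moreover have "card (N - {l}) = card N - 1" using lN fN by simp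
  moreover have "card ET \<ge> 1" using lpE fE by (metis One_nat_def Suc_leI card_gt_0_iff empty_iff)
  moreover have "card ET + 1 = card N" using u unfolding utree_def by auto
  ultimately have cc: "card (ET - {{l,p}}) + 1 = card (N - {l})" by simp
  have "N - {l} \<noteq> {}" using pN lp by blast
  then show ?thesis unfolding utree_def using fN edges conn cc by simp
qed

lemma conn_leaf_p:
  assumes all: "\<forall>e\<in>ET. l \<in> e \<longrightarrow> e = {l,p}" and lp: "l \<noteq> p"
    and c: "connected_in ET S" and lS: "l \<in> S" and xS: "x \<in> S" and xl: "x \<noteq> l"
  shows "p \<in> S"
proof -
  have "(l,x) \<in> (tedge ET \<inter> S \<times> S)\<^sup>*" using c lS xS unfolding connected_in_def by blast
  then obtain z where "(l,z) \<in> tedge ET \<inter> S \<times> S" using xl by (metis converse_rtranclE)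
  then have "z = p" "z \<in> S" using tedge_leaf[OF all lp] by auto
  then show ?thesis by simp
qed

lemma conn_leaf_remove:
  assumes all: "\<forall>e\<in>ET. l \<in> e \<longrightarrow> e = {l,p}" and lp: "l \<noteq> p"
    and c: "connected_in ET S"
  shows "connected_in (ET - {{l,p}}) (S - {l})"
  unfolding connected_in_def
proof (intro ballI)
  fix x y assume x: "x \<in> S - {l}" and y: "y \<in> S - {l}"
  have "(x,y) \<in> (tedge ET \<inter> S \<times> S)\<^sup>*" using c x y unfolding connected_in_def by blast
  moreover have "\<forall>z. (l,z) \<in> tedge ET \<inter> S \<times> S \<longrightarrow> z = p" using tedge_leaf[OF all lp] by blast
  moreover have "\<forall>z. (z,l) \<in> tedge ET \<inter> S \<times> S \<longrightarrow> z = p" using tedge_leaf[OF all lp] by blast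
  ultimately have "(x,y) \<in> (tedge ET \<inter> S \<times> S \<inter> (-{l}) \<times> (-{l}))\<^sup>*"
    using shortcut[of l "tedge ET \<inter> S \<times> S" p x y] lp x y by blast
  then show "(x,y) \<in> (tedge (ET - {{l,p}}) \<inter> (S - {l}) \<times> (S - {l}))\<^sup>*"
    using rtrancl_mono[OF restr_sub[OF all, of S]] by blast
qed

lemma helly:
  "utree N ET \<Longrightarrow> (\<forall>S\<in>F. S \<noteq> {} \<and> S \<subseteq> N \<and> connected_in ET S) \<Longrightarrow>
   (\<forall>S\<in>F. \<forall>S'\<in>F. S \<inter> S' \<noteq> {}) \<Longrightarrow> \<exists>t\<in>N. \<forall>S\<in>F. t \<in> S"
proof (induction "card N" arbitrary: N ET F rule: less_induct)
  case less
  note u = less.prems(1) and hF = less.prems(2) and pw = less.prems(3)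
  have fN: "finite N" and ne: "N \<noteq> {}" using u unfolding utree_def by auto
  show ?case
  proof (cases "card N < 2")
    case True
    then have "card N = 1" using fN ne by (metis One_nat_def card_gt_0_iff less_2_cases_iff not_less0)
    then obtain t where Nt: "N = {t}" by (rule card_1_singletonE)
    have "\<forall>S\<in>F. t \<in> S"
    proof
      fix S assume "S \<in> F"
      then have "S \<noteq> {}" "S \<subseteq> {t}" using hF Nt by auto
      then show "t \<in> S" by blast
    qed
    then show ?thesis using Nt by blast
  next
    case False
    then obtain l p where lN: "l \<in> N" and pN: "p \<in> N" and lp: "l \<noteq> p" and lpE: "{l,p} \<in> ET"
      and all: "\<forall>e\<in>ET. l \<in> e \<longrightarrow> e = {l,p}" using leaf_exists[OF u] by (metis not_less)
    show ?thesis
    proof (cases "\<exists>S\<in>F. S \<subseteq> {l}")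
      case True
      then obtain S where SF: "S \<in> F" and Sl: "S \<subseteq> {l}" by blast
      have "\<forall>S'\<in>F. l \<in> S'"
      proof
        fix S' assume "S' \<in> F"
        then have "S \<inter> S' \<noteq> {}" using pw SF by blast
        then show "l \<in> S'" using Sl by blast
      qed
      then show ?thesis using lN by blast
    next
      case False
      define F' where "F' = (\<lambda>S. S - {l}) ` F"
      have u': "utree (N - {l}) (ET - {{l,p}})" by (rule utree_remove_leaf[OF u lN pN lp lpE all])
      have lt: "card (N - {l}) < card N" using lN fN by (simp add: card_gt_0_iff ne)
      have hF': "\<forall>S\<in>F'. S \<noteq> {} \<and> S \<subseteq> N - {l} \<and> connected_in (ET - {{l,p}}) S"
      proof
        fix S' assume "S' \<in> F'"
        then obtain S where SF: "S \<in> F" and S': "S' = S - {l}" unfolding F'_def by blast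
        have "S' \<noteq> {}" using False SF S' by blast
        moreover have "S' \<subseteq> N - {l}" using hF SF S' by blast
        moreover have "connected_in (ET - {{l,p}}) S'" using conn_leaf_remove[OF all lp] hF SF S' by blast
        ultimately show "S' \<noteq> {} \<and> S' \<subseteq> N - {l} \<and> connected_in (ET - {{l,p}}) S'" by blast
      qed
      have pw': "\<forall>S\<in>F'. \<forall>S'\<in>F'. S \<inter> S' \<noteq> {}"
      proof (intro ballI)
        fix A' B' assume "A' \<in> F'" "B' \<in> F'"
        then obtain A B where AF: "A \<in> F" and BF: "B \<in> F" and A': "A' = A - {l}" and B': "B' = B - {l}"
          unfolding F'_def by blast
        show "A' \<inter> B' \<noteq> {}"
        proof (cases "\<exists>x\<in>A \<inter> B. x \<noteq> l")
          case True
          then show ?thesis using A' B' by blast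
        next
          case nb: False
          have "A \<inter> B \<noteq> {}" using pw AF BF by blast
          then obtain w where w: "w \<in> A \<inter> B" by blast
          then have "w = l" using nb by blast
          then have lAB: "l \<in> A \<inter> B" using w by simp
          then have lA: "l \<in> A" and lB: "l \<in> B" by auto
          obtain x where "x \<in> A" "x \<noteq> l" using False AF by blast
          then have pA: "p \<in> A" using conn_leaf_p[OF all lp _ lA] hF AF by blast
          obtain y where "y \<in> B" "y \<noteq> l" using False BF by blast
          then have pB: "p \<in> B" using conn_leaf_p[OF all lp _ lB] hF BF by blast
          show ?thesis using pA pB lp A' B' by blast
        qed
      qed
      obtain t where tN: "t \<in> N - {l}" and tF: "\<forall>S\<in>F'. t \<in> S"
        using less.hyps[OF lt u' hF' pw'] by blast
      have "\<forall>S\<in>F. t \<in> S" using tF unfolding F'_def by blast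
      then show ?thesis using tN by blast
    qed
  qed
qed



definition gadj :: "'a set set \<Rightarrow> ('a \<times> 'a) set" where "gadj E = {(u,v). {u,v} \<in> E}"
definition gconn :: "'a set set \<Rightarrow> 'a set \<Rightarrow> bool" where
  "gconn E X \<longleftrightarrow> (\<forall>x\<in>X. \<forall>y\<in>X. (x,y) \<in> (gadj E \<inter> X \<times> X)\<^sup>*)"
definition touch :: "'a set set \<Rightarrow> 'a set \<Rightarrow> 'a set \<Rightarrow> bool" where
  "touch E X Y \<longleftrightarrow> X \<inter> Y \<noteq> {} \<or> (\<exists>x\<in>X. \<exists>y\<in>Y. {x,y} \<in> E)"
definition bramble :: "'a ugraph \<Rightarrow> 'a set set \<Rightarrow> bool" where
  "bramble G B \<longleftrightarrow> (\<forall>X\<in>B. X \<noteq> {} \<and> X \<subseteq> fst G \<and> gconn (snd G) X) \<and> (\<forall>X\<in>B. \<forall>Y\<in>B. touch (snd G) X Y)"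
definition border_ge :: "'a set set \<Rightarrow> nat \<Rightarrow> bool" where
  "border_ge B k \<longleftrightarrow> (\<forall>S. finite S \<longrightarrow> (\<forall>X\<in>B. S \<inter> X \<noteq> {}) \<longrightarrow> k \<le> card S)"

lemma td_utree: "tree_decomp G N ET \<beta> \<Longrightarrow> utree N ET"
  unfolding tree_decomp_def by blast
lemma td_bag: "tree_decomp G N ET \<beta> \<Longrightarrow> t \<in> N \<Longrightarrow> \<beta> t \<subseteq> fst G"
  unfolding tree_decomp_def by blast
lemma td_cover: "tree_decomp G N ET \<beta> \<Longrightarrow> v \<in> fst G \<Longrightarrow> \<exists>t\<in>N. v \<in> \<beta> t"
  unfolding tree_decomp_def by blast
lemma td_edge: "tree_decomp G N ET \<beta> \<Longrightarrow> e \<in> snd G \<Longrightarrow> \<exists>t\<in>N. e \<subseteq> \<beta> t"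
  unfolding tree_decomp_def by blast
lemma td_conn: "tree_decomp G N ET \<beta> \<Longrightarrow> v \<in> fst G \<Longrightarrow> connected_in ET {t \<in> N. v \<in> \<beta> t}"
  unfolding tree_decomp_def by blast

lemma subtree_conn:
  assumes td: "tree_decomp G N ET \<beta>" and XV: "X \<subseteq> fst G" and gc: "gconn (snd G) X"
  shows "connected_in ET {t\<in>N. \<beta> t \<inter> X \<noteq> {}}"
proof -
  define TX where "TX = {t\<in>N. \<beta> t \<inter> X \<noteq> {}}"
  define R where "R = tedge ET \<inter> TX \<times> TX"
  have vconn: "(s,t) \<in> R\<^sup>*" if v: "v \<in> X" and s: "s \<in> N" "v \<in> \<beta> s" and t: "t \<in> N" "v \<in> \<beta> t" for v s t
  proof -
    have "connected_in ET {t \<in> N. v \<in> \<beta> t}" using td_conn[OF td] v XV by blast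
    then have "(s,t) \<in> (tedge ET \<inter> {t \<in> N. v \<in> \<beta> t} \<times> {t \<in> N. v \<in> \<beta> t})\<^sup>*"
      using s t unfolding connected_in_def by blast
    moreover have "tedge ET \<inter> {t \<in> N. v \<in> \<beta> t} \<times> {t \<in> N. v \<in> \<beta> t} \<subseteq> R"
      unfolding R_def TX_def using v by blast
    ultimately show ?thesis using rtrancl_mono by blast
  qed
  show ?thesis unfolding connected_in_def TX_def[symmetric] R_def[symmetric]
  proof (intro ballI)
    fix t1 t2 assume t1: "t1 \<in> TX" and t2: "t2 \<in> TX"
    obtain x1 where x1: "x1 \<in> \<beta> t1" "x1 \<in> X" and t1N: "t1 \<in> N" using t1 unfolding TX_def by blast
    obtain x2 where x2: "x2 \<in> \<beta> t2" "x2 \<in> X" and t2N: "t2 \<in> N" using t2 unfolding TX_def by blast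
    have path: "(x1,x2) \<in> (gadj (snd G) \<inter> X \<times> X)\<^sup>*" using gc x1 x2 unfolding gconn_def by blast
    have "\<forall>t\<in>N. y \<in> \<beta> t \<longrightarrow> (t1,t) \<in> R\<^sup>*" if "(x1,y) \<in> (gadj (snd G) \<inter> X \<times> X)\<^sup>*" for y
      using that
    proof (induction rule: rtrancl_induct)
      case base
      then show ?case using vconn x1 t1N by blast
    next
      case (step y z)
      then have yz: "{y,z} \<in> snd G" "y \<in> X" "z \<in> X" unfolding gadj_def by auto
      then obtain s where sN: "s \<in> N" and ss: "{y,z} \<subseteq> \<beta> s" using td_edge[OF td yz(1)] by blast
      have "(t1,s) \<in> R\<^sup>*" using step.IH sN ss by blast
      moreover have "\<forall>t\<in>N. z \<in> \<beta> t \<longrightarrow> (s,t) \<in> R\<^sup>*" using vconn yz sN ss by blast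
      ultimately show ?case by (meson rtrancl_trans)
    qed
    then show "(t1,t2) \<in> R\<^sup>*" using path t2N x2 by blast
  qed
qed

lemma bramble_hit:
  assumes td: "tree_decomp G N ET \<beta>" and br: "bramble G B"
  shows "\<exists>t\<in>N. \<forall>X\<in>B. \<beta> t \<inter> X \<noteq> {}"
proof -
  define F where "F = (\<lambda>X. {t\<in>N. \<beta> t \<inter> X \<noteq> {}}) ` B"
  have u: "utree N ET" using td_utree[OF td] .
  have hF: "\<forall>S\<in>F. S \<noteq> {} \<and> S \<subseteq> N \<and> connected_in ET S"
  proof
    fix S assume "S \<in> F"
    then obtain X where XB: "X \<in> B" and S: "S = {t\<in>N. \<beta> t \<inter> X \<noteq> {}}" unfolding F_def by blast
    have X: "X \<noteq> {}" "X \<subseteq> fst G" "gconn (snd G) X" using br XB unfolding bramble_def by auto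
    then obtain x where "x \<in> X" by blast
    then obtain t where "t \<in> N" "x \<in> \<beta> t" using td_cover[OF td] X(2) by blast
    then have "S \<noteq> {}" using S \<open>x \<in> X\<close> by blast
    moreover have "connected_in ET S" using subtree_conn[OF td X(2,3)] S by simp
    ultimately show "S \<noteq> {} \<and> S \<subseteq> N \<and> connected_in ET S" using S by blast
  qed
  have pw: "\<forall>S\<in>F. \<forall>S'\<in>F. S \<inter> S' \<noteq> {}"
  proof (intro ballI)
    fix S S' assume "S \<in> F" "S' \<in> F"
    then obtain X Y where XB: "X \<in> B" and YB: "Y \<in> B" and S: "S = {t\<in>N. \<beta> t \<inter> X \<noteq> {}}"
      and S': "S' = {t\<in>N. \<beta> t \<inter> Y \<noteq> {}}" unfolding F_def by blast
    have XV: "X \<subseteq> fst G" using br XB unfolding bramble_def by auto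
    have "touch (snd G) X Y" using br XB YB unfolding bramble_def by blast
    then show "S \<inter> S' \<noteq> {}" unfolding touch_def
    proof
      assume "X \<inter> Y \<noteq> {}"
      then obtain x where x: "x \<in> X" "x \<in> Y" by blast
      then obtain t where "t \<in> N" "x \<in> \<beta> t" using td_cover[OF td] XV by blast
      then show ?thesis using S S' x by blast
    next
      assume "\<exists>x\<in>X. \<exists>y\<in>Y. {x,y} \<in> snd G"
      then obtain x y where x: "x \<in> X" "y \<in> Y" "{x,y} \<in> snd G" by blast
      then obtain t where tN: "t \<in> N" and tb: "{x,y} \<subseteq> \<beta> t" using td_edge[OF td x(3)] by blast
      then have "x \<in> \<beta> t" "y \<in> \<beta> t" by auto
      then have "t \<in> S" "t \<in> S'" using S S' x(1,2) tN by auto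
      then show ?thesis by blast
    qed
  qed
  obtain t where tN: "t \<in> N" and tF: "\<forall>S\<in>F. t \<in> S" using helly[OF u hF pw] by blast
  have "\<forall>X\<in>B. \<beta> t \<inter> X \<noteq> {}"
  proof
    fix X assume "X \<in> B"
    then have "{t\<in>N. \<beta> t \<inter> X \<noteq> {}} \<in> F" unfolding F_def by (rule imageI)
    then have "t \<in> {t\<in>N. \<beta> t \<inter> X \<noteq> {}}" using tF by (rule bspec[rotated])
    then show "\<beta> t \<inter> X \<noteq> {}" by simp
  qed
  then show ?thesis using tN by blast
qed

lemma td_lower:
  assumes td: "tree_decomp G N ET \<beta>" and fin: "finite (fst G)" and br: "bramble G B" and bo: "border_ge B k"
  shows "k - 1 \<le> td_width N \<beta>"
proof -
  obtain t where tN: "t \<in> N" and hit: "\<forall>X\<in>B. \<beta> t \<inter> X \<noteq> {}" using bramble_hit[OF td br] by blast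
  have "\<beta> t \<subseteq> fst G" using td_bag[OF td tN] .
  then have "finite (\<beta> t)" using fin finite_subset by blast
  then have "k \<le> card (\<beta> t)" using bo hit unfolding border_ge_def by blast
  moreover have "finite N" using td_utree[OF td] unfolding utree_def by blast
  then have "card (\<beta> t) \<le> Max ((\<lambda>t. card (\<beta> t)) ` N)" using tN by (intro Max_ge) auto
  ultimately show ?thesis unfolding td_width_def by simp
qed

lemma trivial_td:
  assumes "\<forall>e\<in>snd G. e \<subseteq> fst G"
  shows "tree_decomp G {0} {} (\<lambda>_. fst G)"
proof -
  have "utree {0} {}" unfolding utree_def tedge_def by simp
  moreover have "connected_in {} {0}" unfolding connected_in_def by simp
  ultimately show ?thesis unfolding tree_decomp_def using assms by auto
qed

lemma tw_lower:
  assumes fin: "finite (fst G)" and ed: "\<forall>e\<in>snd G. e \<subseteq> fst G" and br: "bramble G B" and bo: "border_ge B k"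
  shows "k - 1 \<le> tw G"
proof -
  have ex: "\<exists>w N ET \<beta>. tree_decomp G N ET \<beta> \<and> td_width N \<beta> = w" using trivial_td[OF ed] by blast
  have "\<exists>N ET \<beta>. tree_decomp G N ET \<beta> \<and> td_width N \<beta> = tw G"
    unfolding tw_def by (rule LeastI_ex[OF ex])
  then obtain N ET \<beta> where "tree_decomp G N ET \<beta>" "td_width N \<beta> = tw G" by blast
  then show ?thesis using td_lower[OF _ fin br bo] by metis
qed

lemma dtw_upper:
  assumes "dtree_decomp D VT ET r X W"
  shows "dtw D \<le> dtd_width VT ET X W"
  unfolding dtw_def by (rule Least_le) (use assms in blast)



lemma gconn_mono: "gconn E X \<Longrightarrow> E \<subseteq> E' \<Longrightarrow> gconn E' X"
proof -
  assume g: "gconn E X" and s: "E \<subseteq> E'"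
  have "gadj E \<inter> X \<times> X \<subseteq> gadj E' \<inter> X \<times> X" using s unfolding gadj_def by auto
  then show ?thesis using g rtrancl_mono unfolding gconn_def by blast
qed

lemma touch_mono: "touch E X Y \<Longrightarrow> E \<subseteq> E' \<Longrightarrow> touch E' X Y"
  unfolding touch_def by blast

lemma bramble_mono:
  assumes b: "bramble G B" and v: "fst G \<subseteq> fst G'" and e: "snd G \<subseteq> snd G'"
  shows "bramble G' B"
proof -
  have "\<forall>X\<in>B. X \<noteq> {} \<and> X \<subseteq> fst G' \<and> gconn (snd G') X"
  proof
    fix X assume "X \<in> B"
    then have "X \<noteq> {}" "X \<subseteq> fst G" "gconn (snd G) X" using b unfolding bramble_def by auto
    moreover have "gconn (snd G') X" using gconn_mono[OF \<open>gconn (snd G) X\<close> e] .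
    ultimately show "X \<noteq> {} \<and> X \<subseteq> fst G' \<and> gconn (snd G') X" using v by blast
  qed
  moreover have "\<forall>X\<in>B. \<forall>Y\<in>B. touch (snd G') X Y"
  proof (intro ballI)
    fix X Y assume "X \<in> B" "Y \<in> B"
    then have "touch (snd G) X Y" using b unfolding bramble_def by auto
    then show "touch (snd G') X Y" using touch_mono[OF _ e] by blast
  qed
  ultimately show ?thesis unfolding bramble_def by blast
qed

lemma un_fst: "fst (un D) = verts D" unfolding un_def by simp

lemma un_snd_mono: "arcs G \<subseteq> arcs D \<Longrightarrow> snd (un G) \<subseteq> snd (un D)"
  unfolding un_def by auto

lemma un_edge: "(u,v) \<in> arcs D \<Longrightarrow> {u,v} \<in> snd (un D)"
  unfolding un_def by auto

lemma un_edge_sub: "arcs D \<subseteq> verts D \<times> verts D \<Longrightarrow> \<forall>e\<in>snd (un D). e \<subseteq> fst (un D)"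
  unfolding un_def by auto

lemma bramble_single: "bramble (un ({v}, {})) {{v}} \<and> border_ge {{v}} 1"
proof -
  have "gconn (snd (un ({v}, {}))) {v}" unfolding gconn_def by simp
  moreover have "touch (snd (un ({v}, {}))) {v} {v}" unfolding touch_def by simp
  ultimately have "bramble (un ({v}, {})) {{v}}" unfolding bramble_def un_def verts_def by simp
  moreover have "border_ge {{v}} 1"
    unfolding border_ge_def
  proof (intro allI impI)
    fix S :: "'a set" assume "finite S" "\<forall>X\<in>{{v}}. S \<inter> X \<noteq> {}"
    then have "v \<in> S" by simp
    then show "1 \<le> card S" using \<open>finite S\<close> by (metis One_nat_def Suc_leI card_gt_0_iff empty_iff)
  qed
  ultimately show ?thesis by blast
qed

lemma border_card:
  assumes "bramble G B" "border_ge B k" "finite (fst G)"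
  shows "k \<le> card (fst G)"
proof -
  have "\<forall>X\<in>B. fst G \<inter> X \<noteq> {}" using assms(1) unfolding bramble_def by blast
  then show ?thesis using assms(2,3) unfolding border_ge_def by blast
qed

lemma pair_gconn:
  assumes "{a,b} \<in> E"
  shows "gconn E {a,b}"
  unfolding gconn_def
proof (intro ballI)
  fix x y assume x: "x \<in> {a,b}" and y: "y \<in> {a,b}"
  have ab: "(a,b) \<in> gadj E \<inter> {a,b} \<times> {a,b}" using assms unfolding gadj_def by simp
  have ba: "(b,a) \<in> gadj E \<inter> {a,b} \<times> {a,b}" using assms unfolding gadj_def by (simp add: insert_commute)
  show "(x,y) \<in> (gadj E \<inter> {a,b} \<times> {a,b})\<^sup>*"
  proof (cases "x = y")
    case True then show ?thesis by simp
  next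
    case False
    then have "(x = a \<and> y = b) \<or> (x = b \<and> y = a)" using x y by blast
    then show ?thesis using ab ba by blast
  qed
qed

lemma bramble_join:
  assumes bG: "bramble (un G) BG" and bH: "bramble (un H) BH"
    and oG: "border_ge BG kG" and oH: "border_ge BH kH"
    and vd: "verts G \<inter> verts H = {}"
    and fU: "fst U = verts G \<union> verts H"
    and eG: "snd (un G) \<subseteq> snd U" and eH: "snd (un H) \<subseteq> snd U"
    and cross: "\<forall>a\<in>verts G. \<forall>b\<in>verts H. {a,b} \<in> snd U"
  shows "bramble U (BG \<union> BH \<union> {{a,b} | a b. a \<in> verts G \<and> b \<in> verts H})
       \<and> border_ge (BG \<union> BH \<union> {{a,b} | a b. a \<in> verts G \<and> b \<in> verts H})
           (min (card (verts G) + kH) (kG + card (verts H)))"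
proof -
  define P where "P = {{a,b} | a b. a \<in> verts G \<and> b \<in> verts H}"
  define VG where "VG = verts G"
  define VH where "VH = verts H"
  have cross': "\<forall>a\<in>VG. \<forall>b\<in>VH. {b,a} \<in> snd U" using cross unfolding VG_def VH_def
    by (simp add: insert_commute)
  have tU: "touch (snd U) X Y" if "x \<in> X" "y \<in> Y" "(x \<in> VG \<and> y \<in> VH) \<or> (x \<in> VH \<and> y \<in> VG)" for X Y x y
  proof -
    have "{x,y} \<in> snd U" using that cross cross' unfolding VG_def VH_def by blast
    then show ?thesis unfolding touch_def using that by blast
  qed
  have "fst (un G) \<subseteq> fst (VG, snd U)" "snd (un G) \<subseteq> snd (VG, snd U)" using eG unfolding un_fst VG_def by auto
  then have bG': "bramble (VG, snd U) BG" by (rule bramble_mono[OF bG])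
  have "fst (un H) \<subseteq> fst (VH, snd U)" "snd (un H) \<subseteq> snd (VH, snd U)" using eH unfolding un_fst VH_def by auto
  then have bH': "bramble (VH, snd U) BH" by (rule bramble_mono[OF bH])
  have BGs: "\<forall>X\<in>BG. X \<noteq> {} \<and> X \<subseteq> VG \<and> gconn (snd U) X"
    using bG' unfolding bramble_def by simp
  have BHs: "\<forall>X\<in>BH. X \<noteq> {} \<and> X \<subseteq> VH \<and> gconn (snd U) X"
    using bH' unfolding bramble_def by simp
  have Ps: "\<forall>X\<in>P. \<exists>a b. X = {a,b} \<and> a \<in> VG \<and> b \<in> VH" unfolding P_def VG_def VH_def by blast
  have part1: "\<forall>X\<in>BG \<union> BH \<union> P. X \<noteq> {} \<and> X \<subseteq> fst U \<and> gconn (snd U) X"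
  proof
    fix X assume "X \<in> BG \<union> BH \<union> P"
    then consider "X \<in> BG" | "X \<in> BH" | "X \<in> P" by blast
    then show "X \<noteq> {} \<and> X \<subseteq> fst U \<and> gconn (snd U) X"
    proof cases
      case 1 then show ?thesis using BGs fU unfolding VG_def by blast
    next
      case 2 then show ?thesis using BHs fU unfolding VH_def by blast
    next
      case 3
      then obtain a b where X: "X = {a,b}" "a \<in> VG" "b \<in> VH" using Ps by blast
      then have "{a,b} \<in> snd U" using cross unfolding VG_def VH_def by blast
      then have "gconn (snd U) X" using pair_gconn X by simp
      then show ?thesis using X fU unfolding VG_def VH_def by blast
    qed
  qed
  have part2: "\<forall>X\<in>BG \<union> BH \<union> P. \<forall>Y\<in>BG \<union> BH \<union> P. touch (snd U) X Y"
  proof (intro ballI)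
    fix X Y assume X: "X \<in> BG \<union> BH \<union> P" and Y: "Y \<in> BG \<union> BH \<union> P"
    have wX: "\<exists>x\<in>X. x \<in> VG" "\<exists>x\<in>X. x \<in> VH" if "X \<in> P" for X
      using that Ps by blast+
    consider "X \<in> BG" | "X \<in> BH" | "X \<in> P" using X by blast
    then show "touch (snd U) X Y"
    proof cases
      case 1
      then obtain x where x: "x \<in> X" "x \<in> VG" using BGs by blast
      consider "Y \<in> BG" | "Y \<in> BH" | "Y \<in> P" using Y by blast
      then show ?thesis
      proof cases
        case 1 then show ?thesis using \<open>X \<in> BG\<close> bG' unfolding bramble_def by simp
      next
        case 2
        then obtain y where "y \<in> Y" "y \<in> VH" using BHs by blast
        then show ?thesis using tU x by blast
      next
        case 3
        then obtain y where "y \<in> Y" "y \<in> VH" using wX by blast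
        then show ?thesis using tU x by blast
      qed
    next
      case 2
      then obtain x where x: "x \<in> X" "x \<in> VH" using BHs by blast
      consider "Y \<in> BG" | "Y \<in> BH" | "Y \<in> P" using Y by blast
      then show ?thesis
      proof cases
        case 2 then show ?thesis using \<open>X \<in> BH\<close> bH' unfolding bramble_def by simp
      next
        case 1
        then obtain y where "y \<in> Y" "y \<in> VG" using BGs by blast
        then show ?thesis using tU x by blast
      next
        case 3
        then obtain y where "y \<in> Y" "y \<in> VG" using wX by blast
        then show ?thesis using tU x by blast
      qed
    next
      case 3
      then obtain x where x: "x \<in> X" "x \<in> VG" using wX by blast
      obtain x' where x': "x' \<in> X" "x' \<in> VH" using wX 3 by blast
      consider "Y \<in> BG" | "Y \<in> BH" | "Y \<in> P" using Y by blast
      then show ?thesis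
      proof cases
        case 1
        then obtain y where "y \<in> Y" "y \<in> VG" using BGs by blast
        then show ?thesis using tU x' by blast
      next
        case 2
        then obtain y where "y \<in> Y" "y \<in> VH" using BHs by blast
        then show ?thesis using tU x by blast
      next
        case 3
        then obtain y where "y \<in> Y" "y \<in> VH" using wX by blast
        then show ?thesis using tU x by blast
      qed
    qed
  qed
  have br: "bramble U (BG \<union> BH \<union> P)" unfolding bramble_def using part1 part2 by blast
  have bo: "border_ge (BG \<union> BH \<union> P) (min (card VG + kH) (kG + card VH))"
    unfolding border_ge_def
  proof (intro allI impI)
    fix S :: "'a set" assume fS: "finite S" and hit: "\<forall>X\<in>BG \<union> BH \<union> P. S \<inter> X \<noteq> {}"
    have f1: "finite (S \<inter> VG)" "finite (S \<inter> VH)" using fS by auto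
    have "\<forall>X\<in>BG. (S \<inter> VG) \<inter> X \<noteq> {}"
    proof
      fix X assume XB: "X \<in> BG"
      then have "S \<inter> X \<noteq> {}" using hit by blast
      moreover have "X \<subseteq> VG" using XB BGs by blast
      ultimately show "(S \<inter> VG) \<inter> X \<noteq> {}" by blast
    qed
    then have cG: "kG \<le> card (S \<inter> VG)" using oG f1(1) unfolding border_ge_def by blast
    have "\<forall>X\<in>BH. (S \<inter> VH) \<inter> X \<noteq> {}"
    proof
      fix X assume XB: "X \<in> BH"
      then have "S \<inter> X \<noteq> {}" using hit by blast
      moreover have "X \<subseteq> VH" using XB BHs by blast
      ultimately show "(S \<inter> VH) \<inter> X \<noteq> {}" by blast
    qed
    then have cH: "kH \<le> card (S \<inter> VH)" using oH f1(2) unfolding border_ge_def by blast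
    have dis: "(S \<inter> VG) \<inter> (S \<inter> VH) = {}" using vd unfolding VG_def VH_def by blast
    have "card ((S \<inter> VG) \<union> (S \<inter> VH)) \<le> card S" using fS by (intro card_mono) auto
    moreover have "card ((S \<inter> VG) \<union> (S \<inter> VH)) = card (S \<inter> VG) + card (S \<inter> VH)"
      using fS dis by (intro card_Un_disjoint) auto
    ultimately have sum: "card (S \<inter> VG) + card (S \<inter> VH) \<le> card S" by simp
    have "VG \<subseteq> S \<or> VH \<subseteq> S"
    proof (rule ccontr)
      assume "\<not> (VG \<subseteq> S \<or> VH \<subseteq> S)"
      then obtain a b where a: "a \<in> VG" "a \<notin> S" and b: "b \<in> VH" "b \<notin> S" by blast
      then have "{a,b} \<in> P" unfolding P_def VG_def VH_def by blast
      then have "S \<inter> {a,b} \<noteq> {}" using hit by blast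
      then show False using a b by blast
    qed
    then show "min (card VG + kH) (kG + card VH) \<le> card S"
    proof
      assume "VG \<subseteq> S"
      then have "S \<inter> VG = VG" by blast
      then show ?thesis using sum cH by simp
    next
      assume "VH \<subseteq> S"
      then have "S \<inter> VH = VH" by blast
      then show ?thesis using sum cG by simp
    qed
  qed
  show ?thesis using br bo unfolding P_def VG_def VH_def by (rule conjI)
qed



lemma dd_ot: "dtree_decomp G VT ET r X W \<Longrightarrow> out_tree VT ET r"
  unfolding dtree_decomp_def by (elim conjE) assumption
lemma dd_X_all: "dtree_decomp G VT ET r X W \<Longrightarrow> \<forall>e\<in>ET. X e \<subseteq> verts G"
  unfolding dtree_decomp_def by (elim conjE) assumption
lemma dd_X: "dtree_decomp G VT ET r X W \<Longrightarrow> e \<in> ET \<Longrightarrow> X e \<subseteq> verts G"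
  using dd_X_all by (rule bspec)
lemma dd_W_all: "dtree_decomp G VT ET r X W \<Longrightarrow> \<forall>t\<in>VT. W t \<noteq> {} \<and> W t \<subseteq> verts G"
  unfolding dtree_decomp_def by (elim conjE) assumption
lemma dd_W: "dtree_decomp G VT ET r X W \<Longrightarrow> t \<in> VT \<Longrightarrow> W t \<noteq> {} \<and> W t \<subseteq> verts G"
  using dd_W_all by (rule bspec)
lemma dd_disj_all: "dtree_decomp G VT ET r X W \<Longrightarrow> \<forall>s\<in>VT. \<forall>t\<in>VT. s \<noteq> t \<longrightarrow> W s \<inter> W t = {}"
  unfolding dtree_decomp_def by (elim conjE) assumption
lemma dd_disj: "dtree_decomp G VT ET r X W \<Longrightarrow> s \<in> VT \<Longrightarrow> t \<in> VT \<Longrightarrow> s \<noteq> t \<Longrightarrow> W s \<inter> W t = {}"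
  using dd_disj_all by blast
lemma dd_union: "dtree_decomp G VT ET r X W \<Longrightarrow> (\<Union>t\<in>VT. W t) = verts G"
  unfolding dtree_decomp_def by (elim conjE) assumption
lemma dd_normal_all: "dtree_decomp G VT ET r X W \<Longrightarrow> \<forall>(u, v)\<in>ET. normal G (X (u, v)) (\<Union>t\<in>{t \<in> VT. (v, t) \<in> ET\<^sup>*}. W t)"
  unfolding dtree_decomp_def by (elim conjE) assumption
lemma dd_normal: "dtree_decomp G VT ET r X W \<Longrightarrow> (u,v) \<in> ET \<Longrightarrow> normal G (X (u, v)) (\<Union>t\<in>{t \<in> VT. (v, t) \<in> ET\<^sup>*}. W t)"
  using dd_normal_all by fastforce

lemma dd_intro:
  "out_tree VT ET r \<Longrightarrow> (\<forall>e\<in>ET. X e \<subseteq> verts G) \<Longrightarrow> (\<forall>t\<in>VT. W t \<noteq> {} \<and> W t \<subseteq> verts G)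
   \<Longrightarrow> (\<forall>s\<in>VT. \<forall>t\<in>VT. s \<noteq> t \<longrightarrow> W s \<inter> W t = {}) \<Longrightarrow> (\<Union>t\<in>VT. W t) = verts G
   \<Longrightarrow> (\<And>u v. (u,v) \<in> ET \<Longrightarrow> normal G (X (u, v)) (\<Union>t\<in>{t \<in> VT. (v, t) \<in> ET\<^sup>*}. W t))
   \<Longrightarrow> dtree_decomp G VT ET r X W"
  unfolding dtree_decomp_def by auto

lemma ot_fin: "out_tree VT ET r \<Longrightarrow> finite VT" unfolding out_tree_def by blast
lemma ot_root: "out_tree VT ET r \<Longrightarrow> r \<in> VT" unfolding out_tree_def by blast
lemma ot_sub: "out_tree VT ET r \<Longrightarrow> ET \<subseteq> VT \<times> VT" unfolding out_tree_def by blast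
lemma ot_noin: "out_tree VT ET r \<Longrightarrow> (u, r) \<notin> ET" unfolding out_tree_def by blast
lemma ot_par: "out_tree VT ET r \<Longrightarrow> v \<in> VT \<Longrightarrow> v \<noteq> r \<Longrightarrow> \<exists>!u. (u, v) \<in> ET" unfolding out_tree_def by blast
lemma ot_reach: "out_tree VT ET r \<Longrightarrow> v \<in> VT \<Longrightarrow> (r, v) \<in> ET\<^sup>*" unfolding out_tree_def by blast

lemma ot_intro:
  "finite VT \<Longrightarrow> r \<in> VT \<Longrightarrow> ET \<subseteq> VT \<times> VT \<Longrightarrow> (\<forall>u. (u, r) \<notin> ET)
   \<Longrightarrow> (\<forall>v\<in>VT. v \<noteq> r \<longrightarrow> (\<exists>!u. (u, v) \<in> ET)) \<Longrightarrow> (\<forall>v\<in>VT. (r, v) \<in> ET\<^sup>*) \<Longrightarrow> out_tree VT ET r"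
  unfolding out_tree_def by blast

lemma ot_to_root: "out_tree VT ET r \<Longrightarrow> (v, r) \<in> ET\<^sup>* \<Longrightarrow> v = r"
  by (erule rtranclE) (auto dest: ot_noin)

lemma ot_child_nonroot: "out_tree VT ET r \<Longrightarrow> (u, v) \<in> ET \<Longrightarrow> v \<noteq> r"
  using ot_noin by metis

lemma walk_fwd:
  assumes st: "\<forall>i. Suc i < length ws \<longrightarrow> (ws!i, ws!Suc i) \<in> A" and ne: "ws \<noteq> []"
    and h: "hd ws \<in> P" and cl: "\<forall>a b. (a,b) \<in> A \<longrightarrow> a \<in> P \<longrightarrow> b \<in> P"
  shows "set ws \<subseteq> P"
proof -
  have "\<forall>i. i < length ws \<longrightarrow> ws!i \<in> P"
  proof (intro allI)
    fix i show "i < length ws \<longrightarrow> ws!i \<in> P"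
    proof (induction i)
      case 0 then show ?case using h ne by (simp add: hd_conv_nth)
    next
      case (Suc i) then show ?case using st cl by (meson Suc_lessD)
    qed
  qed
  then show ?thesis by (auto simp: set_conv_nth)
qed

lemma walk_bwd:
  assumes st: "\<forall>i. Suc i < length ws \<longrightarrow> (ws!i, ws!Suc i) \<in> A" and ne: "ws \<noteq> []"
    and h: "last ws \<in> P" and cl: "\<forall>a b. (a,b) \<in> A \<longrightarrow> b \<in> P \<longrightarrow> a \<in> P"
  shows "set ws \<subseteq> P"
proof -
  have allj: "\<forall>j. j < length ws \<longrightarrow> ws ! (length ws - 1 - j) \<in> P"
  proof (intro allI)
    fix j show "j < length ws \<longrightarrow> ws ! (length ws - 1 - j) \<in> P"
    proof (induction j)
      case 0 then show ?case using h ne by (simp add: last_conv_nth)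
    next
      case (Suc j)
      show ?case
      proof
        assume lt: "Suc j < length ws"
        define i where "i = length ws - 1 - Suc j"
        have si: "Suc i = length ws - 1 - j" "Suc i < length ws" using lt unfolding i_def by auto
        have "ws ! Suc i \<in> P" using Suc lt si by simp
        moreover have "(ws!i, ws!Suc i) \<in> A" using st si by blast
        ultimately have "ws ! i \<in> P" using cl by blast
        then show "ws ! (length ws - 1 - Suc j) \<in> P" unfolding i_def .
      qed
    qed
  qed
  have "\<forall>i. i < length ws \<longrightarrow> ws!i \<in> P"
  proof (intro allI impI)
    fix i assume "i < length ws"
    then have "length ws - 1 - (length ws - 1 - i) = i" "length ws - 1 - i < length ws" by auto
    then show "ws!i \<in> P" using allj by metis
  qed
  then show ?thesis by (auto simp: set_conv_nth)
qed

lemma dwalk_steps: "dwalk G ws \<Longrightarrow> \<forall>i. Suc i < length ws \<longrightarrow> (ws!i, ws!Suc i) \<in> arcs G"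
  unfolding dwalk_def by blast

lemma verts_del: "verts (del_verts G Z) = verts G - Z" unfolding del_verts_def verts_def by simp
lemma arcs_del: "arcs (del_verts G Z) = {(u, v) \<in> arcs G. u \<notin> Z \<and> v \<notin> Z}" unfolding del_verts_def arcs_def by simp

lemma walk_transfer:
  assumes w: "dwalk (del_verts D Z) ws" and sub: "set ws \<subseteq> verts G"
    and aG: "\<forall>a b. (a,b) \<in> arcs D \<longrightarrow> a \<in> verts G \<longrightarrow> b \<in> verts G \<longrightarrow> (a,b) \<in> arcs G"
  shows "dwalk (del_verts G Z) ws"
proof -
  have ne: "ws \<noteq> []" and s: "set ws \<subseteq> verts D - Z" using w unfolding dwalk_def verts_del by auto
  have "\<forall>i. Suc i < length ws \<longrightarrow> (ws!i, ws!Suc i) \<in> arcs (del_verts G Z)"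
  proof (intro allI impI)
    fix i assume i: "Suc i < length ws"
    then have "(ws!i, ws!Suc i) \<in> arcs (del_verts D Z)" using w unfolding dwalk_def by blast
    then have a: "(ws!i, ws!Suc i) \<in> arcs D" "ws!i \<notin> Z" "ws!Suc i \<notin> Z" unfolding arcs_del by auto
    have "ws!i \<in> set ws" "ws!Suc i \<in> set ws" using i by auto
    then have "ws!i \<in> verts G" "ws!Suc i \<in> verts G" using sub by auto
    then show "(ws!i, ws!Suc i) \<in> arcs (del_verts G Z)" using a aG unfolding arcs_del by auto
  qed
  moreover have "set ws \<subseteq> verts (del_verts G Z)" using s sub unfolding verts_del by auto
  ultimately show ?thesis using ne unfolding dwalk_def by blast
qed



lemma verts_series: "verts (series_comp G H) = verts G \<union> verts H"
  unfolding series_comp_def by (simp add: verts_def)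
lemma arcs_series: "arcs (series_comp G H) = arcs G \<union> arcs H \<union> verts G \<times> verts H \<union> verts H \<times> verts G"
  unfolding series_comp_def by (simp add: arcs_def verts_def)
lemma verts_order: "verts (order_comp G H) = verts G \<union> verts H"
  unfolding order_comp_def by (simp add: verts_def)
lemma arcs_order: "arcs (order_comp G H) = arcs G \<union> arcs H \<union> verts G \<times> verts H"
  unfolding order_comp_def by (simp add: arcs_def verts_def)
lemma verts_union: "verts (disj_union G H) = verts G \<union> verts H"
  unfolding disj_union_def by (simp add: verts_def)
lemma arcs_union: "arcs (disj_union G H) = arcs G \<union> arcs H"
  unfolding disj_union_def by (simp add: arcs_def)

lemma dwalk_del_mono: "dwalk (del_verts G Z') ws \<Longrightarrow> Z \<subseteq> Z' \<Longrightarrow> dwalk (del_verts G Z) ws"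
  unfolding dwalk_def verts_del arcs_del by blast

lemma series_dd:
  assumes d: "dtree_decomp G VT ET r X W" and vd: "verts G \<inter> verts H = {}"
    and aH: "arcs H \<subseteq> verts H \<times> verts H" and fG: "finite (verts G)" and fH: "finite (verts H)"
  shows "\<exists>X' W'. dtree_decomp (series_comp G H) VT ET r X' W'
           \<and> dtd_width VT ET X' W' \<le> dtd_width VT ET X W + card (verts H)"
proof -
  define X' where "X' = (\<lambda>e. X e \<union> verts H)"
  define W' where "W' = (\<lambda>t. if t = r then W t \<union> verts H else W t)"
  have ot: "out_tree VT ET r" using dd_ot[OF d] .
  have rV: "r \<in> VT" using ot_root[OF ot] .
  have fV: "finite VT" using ot_fin[OF ot] .
  have D: "dtree_decomp (series_comp G H) VT ET r X' W'"
  proof (rule dd_intro[OF ot])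
    show "\<forall>e\<in>ET. X' e \<subseteq> verts (series_comp G H)"
      using dd_X[OF d] unfolding X'_def verts_series by blast
    show "\<forall>t\<in>VT. W' t \<noteq> {} \<and> W' t \<subseteq> verts (series_comp G H)"
      using dd_W[OF d] unfolding W'_def verts_series by auto
    show "\<forall>s\<in>VT. \<forall>t\<in>VT. s \<noteq> t \<longrightarrow> W' s \<inter> W' t = {}"
    proof (intro ballI impI)
      fix s t assume s: "s \<in> VT" and t: "t \<in> VT" and st: "s \<noteq> t"
      have "W s \<inter> W t = {}" using dd_disj[OF d s t st] .
      moreover have "W s \<subseteq> verts G" "W t \<subseteq> verts G" using dd_W[OF d s] dd_W[OF d t] by auto
      ultimately show "W' s \<inter> W' t = {}" unfolding W'_def using vd st by auto
    qed
    have "(\<Union>t\<in>VT. W' t) = (\<Union>t\<in>VT. W t) \<union> verts H"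
      unfolding W'_def using rV by (auto split: if_splits)
    then show "(\<Union>t\<in>VT. W' t) = verts (series_comp G H)"
      unfolding verts_series dd_union[OF d] .
  next
    fix u v assume uv: "(u,v) \<in> ET"
    have vr: "v \<noteq> r" using ot_child_nonroot[OF ot uv] .
    define S where "S = (\<Union>t\<in>{t \<in> VT. (v, t) \<in> ET\<^sup>*}. W t)"
    have Seq: "(\<Union>t\<in>{t \<in> VT. (v, t) \<in> ET\<^sup>*}. W' t) = S"
      unfolding S_def
    proof (rule SUP_cong)
      fix t assume "t \<in> {t \<in> VT. (v, t) \<in> ET\<^sup>*}"
      then have "t \<noteq> r" using ot_to_root[OF ot] vr by blast
      then show "W' t = W t" unfolding W'_def by simp
    qed simp
    have nG: "normal G (X (u,v)) S" using dd_normal[OF d uv] unfolding S_def .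
    have SG: "S \<subseteq> verts G" unfolding S_def using dd_W[OF d] by blast
    have aG: "\<forall>a b. (a,b) \<in> arcs (series_comp G H) \<longrightarrow> a \<in> verts G \<longrightarrow> b \<in> verts G \<longrightarrow> (a,b) \<in> arcs G"
      unfolding arcs_series using aH vd by blast
    show "normal (series_comp G H) (X' (u, v)) (\<Union>t\<in>{t \<in> VT. (v, t) \<in> ET\<^sup>*}. W' t)"
      unfolding Seq normal_def
    proof (intro allI impI)
      fix ws assume w: "dwalk (del_verts (series_comp G H) (X' (u, v))) ws \<and> hd ws \<in> S \<and> last ws \<in> S"
      have sw: "set ws \<subseteq> verts (series_comp G H) - X' (u,v)" using w unfolding dwalk_def verts_del by blast
      then have swG: "set ws \<subseteq> verts G" unfolding verts_series X'_def by blast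
      have "dwalk (del_verts G (X' (u,v))) ws" using walk_transfer[OF _ swG aG] w by blast
      then have "dwalk (del_verts G (X (u,v))) ws" using dwalk_del_mono unfolding X'_def by blast
      then have "set ws \<inter> (verts G - (X (u,v) \<union> S)) = {}" using nG w unfolding normal_def by blast
      then show "set ws \<inter> (verts (series_comp G H) - (X' (u, v) \<union> S)) = {}"
        using swG unfolding X'_def verts_series by blast
    qed
  qed
  define val where "val = (\<lambda>t. card (W t \<union> (\<Union>e\<in>{e \<in> ET. fst e = t \<or> snd e = t}. X e)))"
  define val' where "val' = (\<lambda>t. card (W' t \<union> (\<Union>e\<in>{e \<in> ET. fst e = t \<or> snd e = t}. X' e)))"
  have vb: "val' t \<le> val t + card (verts H)" if t: "t \<in> VT" for t
  proof -
    let ?A = "W t \<union> (\<Union>e\<in>{e \<in> ET. fst e = t \<or> snd e = t}. X e)"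
    have "?A \<subseteq> verts G" using dd_W[OF d t] dd_X[OF d] by blast
    then have fA: "finite ?A" using fG finite_subset by blast
    have "W' t \<union> (\<Union>e\<in>{e \<in> ET. fst e = t \<or> snd e = t}. X' e) \<subseteq> ?A \<union> verts H"
      unfolding W'_def X'_def by auto
    then have "val' t \<le> card (?A \<union> verts H)" unfolding val'_def using fA fH by (intro card_mono) auto
    also have "\<dots> \<le> card ?A + card (verts H)" by (rule card_Un_le)
    finally show ?thesis unfolding val_def .
  qed
  have M: "Max (val' ` VT) \<le> Max (val ` VT) + card (verts H)"
  proof -
    have "\<forall>t\<in>VT. val' t \<le> Max (val ` VT) + card (verts H)"
    proof
      fix t assume t: "t \<in> VT"
      have "val t \<le> Max (val ` VT)" using fV t by (intro Max_ge) auto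
      then show "val' t \<le> Max (val ` VT) + card (verts H)" using vb[OF t] by simp
    qed
    then show ?thesis using fV rV by (subst Max_le_iff) auto
  qed
  have "dtd_width VT ET X' W' \<le> dtd_width VT ET X W + card (verts H)"
    unfolding dtd_width_def val_def[symmetric] val'_def[symmetric] using M by simp
  then show ?thesis using D by blast
qed

lemma inj_from_inv: "\<forall>n. g (f n) = n \<Longrightarrow> inj f"
  by (metis injI)

lemma rtrancl_map_fwd:
  assumes gf: "\<forall>n. g (f n) = n" and p: "(x, y) \<in> (map_prod f f ` R)\<^sup>*"
  shows "\<forall>a. x = f a \<longrightarrow> (\<exists>b. y = f b \<and> (a,b) \<in> R\<^sup>*)"
  using p
proof (induction rule: rtrancl_induct)
  case base then show ?case by blast
next
  case (step y z)
  obtain c d where cd: "y = f c" "z = f d" "(c,d) \<in> R" using step.hyps(2) by auto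
  show ?case
  proof (intro allI impI)
    fix a assume xa: "x = f a"
    then obtain b where b: "y = f b" "(a,b) \<in> R\<^sup>*" using step.IH by blast
    have "c = b" using cd(1) b(1) gf by metis
    then have "(a,d) \<in> R\<^sup>*" using b(2) cd(3) by (meson rtrancl.rtrancl_into_rtrancl)
    then show "\<exists>b. z = f b \<and> (a,b) \<in> R\<^sup>*" using cd(2) by blast
  qed
qed

lemma rtrancl_map_bwd:
  assumes p: "(a, b) \<in> R\<^sup>*"
  shows "(f a, f b) \<in> (map_prod f f ` R)\<^sup>*"
  using p
proof (induction rule: rtrancl_induct)
  case base then show ?case by simp
next
  case (step y z)
  then have "(f y, f z) \<in> map_prod f f ` R" by force
  then show ?case using step.IH by (meson rtrancl.rtrancl_into_rtrancl)
qed

lemma rtrancl_map_iff: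
  assumes gf: "\<forall>n. g (f n) = n"
  shows "((f a, f b) \<in> (map_prod f f ` R)\<^sup>*) = ((a,b) \<in> R\<^sup>*)"
proof
  assume "(f a, f b) \<in> (map_prod f f ` R)\<^sup>*"
  then obtain b' where "f b = f b'" "(a,b') \<in> R\<^sup>*" using rtrancl_map_fwd[where g=g and f=f, OF gf] by blast
  moreover have "b = b'" using calculation(1) gf by metis
  ultimately show "(a,b) \<in> R\<^sup>*" by simp
next
  assume "(a,b) \<in> R\<^sup>*"
  then show "(f a, f b) \<in> (map_prod f f ` R)\<^sup>*" by (rule rtrancl_map_bwd)
qed



lemma relabel:
  assumes d: "dtree_decomp G VT ET r X W" and gf: "\<forall>n. g (f n) = (n::nat)"
  shows "dtree_decomp G (f ` VT) (map_prod f f ` ET) (f r) (\<lambda>e. X (g (fst e), g (snd e))) (\<lambda>t. W (g t))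
    \<and> dtd_width (f ` VT) (map_prod f f ` ET) (\<lambda>e. X (g (fst e), g (snd e))) (\<lambda>t. W (g t)) = dtd_width VT ET X W"
proof -
  define ET' where "ET' = map_prod f f ` ET"
  define X' where "X' = (\<lambda>e. X (g (fst e), g (snd e)))"
  define W' where "W' = (\<lambda>t. W (g t))"
  have injf: "inj f" using inj_from_inv[where g=g and f=f, OF gf] .
  have feq: "(f a = f b) = (a = b)" for a b using injf by (simp add: inj_eq)
  have ot: "out_tree VT ET r" using dd_ot[OF d] .
  have sub: "ET \<subseteq> VT \<times> VT" using ot_sub[OF ot] .
  have ET'_mem: "((x,y) \<in> ET') = (\<exists>a b. x = f a \<and> y = f b \<and> (a,b) \<in> ET)" for x y
    unfolding ET'_def by force
  have ET'_f: "((f a, f b) \<in> ET') = ((a,b) \<in> ET)" for a b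
    unfolding ET'_mem feq by blast
  have ot': "out_tree (f ` VT) ET' (f r)"
  proof (rule ot_intro)
    show "finite (f ` VT)" using ot_fin[OF ot] by simp
    show "f r \<in> f ` VT" using ot_root[OF ot] by simp
    show "ET' \<subseteq> f ` VT \<times> f ` VT" unfolding ET'_def using sub by auto
    show "\<forall>u. (u, f r) \<notin> ET'" unfolding ET'_mem feq using ot_noin[OF ot] by blast
    show "\<forall>v\<in>f ` VT. v \<noteq> f r \<longrightarrow> (\<exists>!u. (u, v) \<in> ET')"
    proof (intro ballI impI)
      fix v assume "v \<in> f ` VT" "v \<noteq> f r"
      then obtain w where w: "v = f w" "w \<in> VT" "w \<noteq> r" by blast
      have "\<exists>!u. (u, w) \<in> ET" using ot_par[OF ot w(2) w(3)] .
      then obtain u0 where u0: "(u0, w) \<in> ET" "\<forall>u. (u, w) \<in> ET \<longrightarrow> u = u0" by blast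
      show "\<exists>!u. (u, v) \<in> ET'"
      proof (rule ex1I[of _ "f u0"])
        show "(f u0, v) \<in> ET'" using u0(1) w(1) ET'_f by simp
        fix u assume "(u, v) \<in> ET'"
        then obtain a b where "u = f a" "v = f b" "(a,b) \<in> ET" unfolding ET'_mem by blast
        then have "b = w" "u = f a" "(a,w) \<in> ET" using w(1) feq by auto
        then show "u = f u0" using u0(2) by blast
      qed
    qed
    show "\<forall>v\<in>f ` VT. (f r, v) \<in> ET'\<^sup>*"
    proof
      fix v assume "v \<in> f ` VT"
      then obtain w where w: "v = f w" "w \<in> VT" by blast
      have "(r, w) \<in> ET\<^sup>*" using ot_reach[OF ot w(2)] .
      then have "(f r, f w) \<in> (map_prod f f ` ET)\<^sup>*" by (rule rtrancl_map_bwd)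
      then show "(f r, v) \<in> ET'\<^sup>*" unfolding ET'_def w(1) .
    qed
  qed
  have desc: "{t \<in> f ` VT. (f v, t) \<in> ET'\<^sup>*} = f ` {t \<in> VT. (v, t) \<in> ET\<^sup>*}" for v
  proof
    show "{t \<in> f ` VT. (f v, t) \<in> ET'\<^sup>*} \<subseteq> f ` {t \<in> VT. (v, t) \<in> ET\<^sup>*}"
    proof
      fix t assume "t \<in> {t \<in> f ` VT. (f v, t) \<in> ET'\<^sup>*}"
      then obtain w where w: "t = f w" "w \<in> VT" "(f v, f w) \<in> ET'\<^sup>*" by blast
      then have "(v, w) \<in> ET\<^sup>*" using rtrancl_map_iff[where g=g and f=f and R=ET, OF gf] unfolding ET'_def by simp
      then show "t \<in> f ` {t \<in> VT. (v, t) \<in> ET\<^sup>*}" using w by blast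
    qed
    show "f ` {t \<in> VT. (v, t) \<in> ET\<^sup>*} \<subseteq> {t \<in> f ` VT. (f v, t) \<in> ET'\<^sup>*}"
    proof
      fix t assume "t \<in> f ` {t \<in> VT. (v, t) \<in> ET\<^sup>*}"
      then obtain w where w: "t = f w" "w \<in> VT" "(v, w) \<in> ET\<^sup>*" by blast
      have "(f v, f w) \<in> (map_prod f f ` ET)\<^sup>*" using w(3) by (rule rtrancl_map_bwd)
      then show "t \<in> {t \<in> f ` VT. (f v, t) \<in> ET'\<^sup>*}" unfolding ET'_def using w by blast
    qed
  qed
  have D: "dtree_decomp G (f ` VT) ET' (f r) X' W'"
  proof (rule dd_intro[OF ot'])
    show "\<forall>e\<in>ET'. X' e \<subseteq> verts G"
    proof
      fix e assume "e \<in> ET'"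
      then obtain a b where "e = (f a, f b)" "(a,b) \<in> ET" unfolding ET'_def by auto
      then show "X' e \<subseteq> verts G" unfolding X'_def using gf dd_X[OF d] by simp
    qed
    show "\<forall>t\<in>f ` VT. W' t \<noteq> {} \<and> W' t \<subseteq> verts G" unfolding W'_def using gf dd_W[OF d] by simp
    show "\<forall>s\<in>f ` VT. \<forall>t\<in>f ` VT. s \<noteq> t \<longrightarrow> W' s \<inter> W' t = {}"
      unfolding W'_def using gf dd_disj[OF d] by auto
    have "(\<Union>t\<in>f ` VT. W' t) = (\<Union>t\<in>VT. W t)" unfolding W'_def using gf by simp
    then show "(\<Union>t\<in>f ` VT. W' t) = verts G" using dd_union[OF d] by simp
  next
    fix u' v' assume "(u', v') \<in> ET'"
    then obtain u v where uv: "u' = f u" "v' = f v" "(u,v) \<in> ET" unfolding ET'_mem by blast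
    have "(\<Union>t\<in>{t \<in> f ` VT. (v', t) \<in> ET'\<^sup>*}. W' t) = (\<Union>t\<in>{t \<in> VT. (v, t) \<in> ET\<^sup>*}. W t)"
      unfolding uv desc W'_def using gf by simp
    moreover have "X' (u', v') = X (u, v)" unfolding X'_def uv using gf by simp
    ultimately show "normal G (X' (u', v')) (\<Union>t\<in>{t \<in> f ` VT. (v', t) \<in> ET'\<^sup>*}. W' t)"
      using dd_normal[OF d uv(3)] by simp
  qed
  have inc: "{e \<in> ET'. fst e = f w \<or> snd e = f w} = map_prod f f ` {e \<in> ET. fst e = w \<or> snd e = w}" for w
  proof
    show "{e \<in> ET'. fst e = f w \<or> snd e = f w} \<subseteq> map_prod f f ` {e \<in> ET. fst e = w \<or> snd e = w}"
    proof
      fix e assume e: "e \<in> {e \<in> ET'. fst e = f w \<or> snd e = f w}"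
      then obtain a b where ab: "e = (f a, f b)" "(a,b) \<in> ET" unfolding ET'_def by auto
      then have "a = w \<or> b = w" using e feq by auto
      then show "e \<in> map_prod f f ` {e \<in> ET. fst e = w \<or> snd e = w}" using ab by force
    qed
    show "map_prod f f ` {e \<in> ET. fst e = w \<or> snd e = w} \<subseteq> {e \<in> ET'. fst e = f w \<or> snd e = f w}"
      unfolding ET'_def by auto
  qed
  have val: "card (W' (f w) \<union> (\<Union>e\<in>{e \<in> ET'. fst e = f w \<or> snd e = f w}. X' e))
      = card (W w \<union> (\<Union>e\<in>{e \<in> ET. fst e = w \<or> snd e = w}. X e))" for w
  proof -
    have "(\<Union>e\<in>{e \<in> ET'. fst e = f w \<or> snd e = f w}. X' e) = (\<Union>e\<in>{e \<in> ET. fst e = w \<or> snd e = w}. X e)"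
      unfolding inc X'_def using gf by auto
    moreover have "W' (f w) = W w" unfolding W'_def using gf by simp
    ultimately show ?thesis by simp
  qed
  have "dtd_width (f ` VT) ET' X' W' = dtd_width VT ET X W"
    unfolding dtd_width_def image_image val by simp
  then show ?thesis using D unfolding ET'_def X'_def W'_def by simp
qed



lemma glue:
  assumes d1: "dtree_decomp G VT1 ET1 r1 X1 W1" and d2: "dtree_decomp H VT2 ET2 r2 X2 W2"
    and dj: "VT1 \<inter> VT2 = {}" and vd: "verts G \<inter> verts H = {}"
    and vD: "verts D = verts G \<union> verts H"
    and aD: "arcs D \<subseteq> verts D \<times> verts D"
    and noback: "\<forall>a b. (a,b) \<in> arcs D \<longrightarrow> a \<in> verts H \<longrightarrow> b \<in> verts H"
    and aG: "\<forall>a b. (a,b) \<in> arcs D \<longrightarrow> a \<in> verts G \<longrightarrow> b \<in> verts G \<longrightarrow> (a,b) \<in> arcs G"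
    and aH: "\<forall>a b. (a,b) \<in> arcs D \<longrightarrow> a \<in> verts H \<longrightarrow> b \<in> verts H \<longrightarrow> (a,b) \<in> arcs H"
  shows "\<exists>VT ET r X W. dtree_decomp D VT ET r X W
           \<and> dtd_width VT ET X W = max (dtd_width VT1 ET1 X1 W1) (dtd_width VT2 ET2 X2 W2)"
proof -
  define VT where "VT = VT1 \<union> VT2"
  define ET where "ET = ET1 \<union> ET2 \<union> {(r1,r2)}"
  define X where "X = (\<lambda>e. if e \<in> ET1 then X1 e else if e \<in> ET2 then X2 e else {})"
  define W where "W = (\<lambda>t. if t \<in> VT1 then W1 t else W2 t)"
  have ot1: "out_tree VT1 ET1 r1" using dd_ot[OF d1] .
  have ot2: "out_tree VT2 ET2 r2" using dd_ot[OF d2] .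
  have r1V: "r1 \<in> VT1" using ot_root[OF ot1] .
  have r2V: "r2 \<in> VT2" using ot_root[OF ot2] .
  have s1: "ET1 \<subseteq> VT1 \<times> VT1" using ot_sub[OF ot1] .
  have s2: "ET2 \<subseteq> VT2 \<times> VT2" using ot_sub[OF ot2] .
  have r2n: "r2 \<notin> VT1" using r2V dj by blast
  have r1n: "r1 \<notin> VT2" using r1V dj by blast
  have n1: "(r1, r2) \<notin> ET1" using s1 r2n by blast
  have n2: "(r1, r2) \<notin> ET2" using s2 r1n by blast
  have E1E: "ET1 \<subseteq> ET" and E2E: "ET2 \<subseteq> ET" unfolding ET_def by auto
  have reach2: "(a,b) \<in> ET2\<^sup>* \<and> b \<in> VT2" if "a \<in> VT2" "(a,b) \<in> ET\<^sup>*" for a b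
    using that(2)
  proof (induction rule: rtrancl_induct)
    case base then show ?case using that(1) by simp
  next
    case (step b c)
    then have bV: "b \<in> VT2" and ab: "(a,b) \<in> ET2\<^sup>*" by auto
    have "(b,c) \<in> ET1 \<or> (b,c) \<in> ET2 \<or> (b,c) = (r1,r2)" using step.hyps(2) unfolding ET_def by blast
    moreover have "(b,c) \<notin> ET1" using s1 bV dj by blast
    moreover have "(b,c) \<noteq> (r1,r2)" using bV r1n by blast
    ultimately have "(b,c) \<in> ET2" by blast
    then show ?case using ab s2 by (meson mem_Sigma_iff rtrancl.rtrancl_into_rtrancl subsetD)
  qed
  have reach1: "(a,b) \<in> ET1\<^sup>* \<and> b \<in> VT1 \<and> b \<noteq> r1" if "a \<in> VT1" "a \<noteq> r1" "(a,b) \<in> ET\<^sup>*" for a b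
    using that(3)
  proof (induction rule: rtrancl_induct)
    case base then show ?case using that(1,2) by simp
  next
    case (step b c)
    then have bV: "b \<in> VT1" and br: "b \<noteq> r1" and ab: "(a,b) \<in> ET1\<^sup>*" by auto
    have "(b,c) \<in> ET1 \<or> (b,c) \<in> ET2 \<or> (b,c) = (r1,r2)" using step.hyps(2) unfolding ET_def by blast
    moreover have "(b,c) \<notin> ET2" using s2 bV dj by blast
    moreover have "(b,c) \<noteq> (r1,r2)" using br by blast
    ultimately have bc: "(b,c) \<in> ET1" by blast
    then have "c \<in> VT1" using s1 by blast
    moreover have "c \<noteq> r1" using bc ot_noin[OF ot1] by blast
    ultimately show ?case using ab bc by (meson rtrancl.rtrancl_into_rtrancl)
  qed
  have m1: "ET1\<^sup>* \<subseteq> ET\<^sup>*" using rtrancl_mono[OF E1E] .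
  have m2: "ET2\<^sup>* \<subseteq> ET\<^sup>*" using rtrancl_mono[OF E2E] .
  have ot: "out_tree VT ET r1"
  proof (rule ot_intro)
    show "finite VT" unfolding VT_def using ot_fin[OF ot1] ot_fin[OF ot2] by simp
    show "r1 \<in> VT" unfolding VT_def using r1V by simp
    show "ET \<subseteq> VT \<times> VT" unfolding ET_def VT_def using s1 s2 r1V r2V by blast
    show "\<forall>u. (u, r1) \<notin> ET"
    proof
      fix u
      have "(u, r1) \<notin> ET1" using ot_noin[OF ot1] .
      moreover have "(u, r1) \<notin> ET2" using s2 r1n by blast
      moreover have "r1 \<noteq> r2" using r1V r2n by blast
      ultimately show "(u, r1) \<notin> ET" unfolding ET_def by blast
    qed
    show "\<forall>v\<in>VT. v \<noteq> r1 \<longrightarrow> (\<exists>!u. (u, v) \<in> ET)"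
    proof (intro ballI impI)
      fix v assume vV: "v \<in> VT" and vr: "v \<noteq> r1"
      show "\<exists>!u. (u, v) \<in> ET"
      proof (cases "v \<in> VT1")
        case True
        have "\<exists>!u. (u, v) \<in> ET1" using ot_par[OF ot1 True vr] .
        then obtain u0 where u0: "(u0, v) \<in> ET1" "\<forall>u. (u, v) \<in> ET1 \<longrightarrow> u = u0" by blast
        have "\<forall>u. (u, v) \<in> ET \<longrightarrow> (u, v) \<in> ET1"
        proof (intro allI impI)
          fix u assume "(u, v) \<in> ET"
          moreover have "(u, v) \<notin> ET2" using s2 True dj by blast
          moreover have "v \<noteq> r2" using True r2n by blast
          ultimately show "(u, v) \<in> ET1" unfolding ET_def by blast
        qed
        then show ?thesis using u0 E1E by blast
      next
        case False
        then have v2: "v \<in> VT2" using vV unfolding VT_def by blast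
        show ?thesis
        proof (cases "v = r2")
          case True
          have "\<forall>u. (u, v) \<in> ET \<longrightarrow> u = r1"
          proof (intro allI impI)
            fix u assume "(u, v) \<in> ET"
            moreover have "(u, v) \<notin> ET1" using s1 False by blast
            moreover have "(u, v) \<notin> ET2" using ot_noin[OF ot2] True by blast
            ultimately show "u = r1" unfolding ET_def by blast
          qed
          moreover have "(r1, v) \<in> ET" unfolding ET_def True by blast
          ultimately show ?thesis by blast
        next
          case vr2: False
          have "\<exists>!u. (u, v) \<in> ET2" using ot_par[OF ot2 v2 vr2] .
          then obtain u0 where u0: "(u0, v) \<in> ET2" "\<forall>u. (u, v) \<in> ET2 \<longrightarrow> u = u0" by blast
          have "\<forall>u. (u, v) \<in> ET \<longrightarrow> (u, v) \<in> ET2"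
          proof (intro allI impI)
            fix u assume "(u, v) \<in> ET"
            moreover have "(u, v) \<notin> ET1" using s1 False by blast
            ultimately show "(u, v) \<in> ET2" using vr2 unfolding ET_def by blast
          qed
          then show ?thesis using u0 E2E by blast
        qed
      qed
    qed
    show "\<forall>v\<in>VT. (r1, v) \<in> ET\<^sup>*"
    proof
      fix v assume "v \<in> VT"
      then consider "v \<in> VT1" | "v \<in> VT2" unfolding VT_def by blast
      then show "(r1, v) \<in> ET\<^sup>*"
      proof cases
        case 1 then show ?thesis using ot_reach[OF ot1] m1 by blast
      next
        case 2
        have "(r2, v) \<in> ET\<^sup>*" using ot_reach[OF ot2 2] m2 by blast
        moreover have "(r1, r2) \<in> ET" unfolding ET_def by blast
        ultimately show ?thesis by (meson converse_rtrancl_into_rtrancl)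
      qed
    qed
  qed
  have W1G: "W1 t \<subseteq> verts G" if "t \<in> VT1" for t using dd_W[OF d1 that] by blast
  have W2H: "W2 t \<subseteq> verts H" if "t \<in> VT2" for t using dd_W[OF d2 that] by blast
  have WonV2: "W t = W2 t" if "t \<in> VT2" for t unfolding W_def using that dj by auto
  have WonV1: "W t = W1 t" if "t \<in> VT1" for t unfolding W_def using that by auto
  have bwdG: "\<forall>a b. (a,b) \<in> arcs (del_verts D Z) \<longrightarrow> b \<in> verts G \<longrightarrow> a \<in> verts G" for Z
  proof (intro allI impI)
    fix a b assume ab: "(a,b) \<in> arcs (del_verts D Z)" and b: "b \<in> verts G"
    then have "(a,b) \<in> arcs D" unfolding arcs_del by blast
    then have "a \<in> verts G \<union> verts H" using aD vD by blast
    moreover have "a \<notin> verts H" using noback \<open>(a,b) \<in> arcs D\<close> b vd by blast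
    ultimately show "a \<in> verts G" by blast
  qed
  have fwdH: "\<forall>a b. (a,b) \<in> arcs (del_verts D Z) \<longrightarrow> a \<in> verts H \<longrightarrow> b \<in> verts H" for Z
    using noback unfolding arcs_del by blast
  have D: "dtree_decomp D VT ET r1 X W"
  proof (rule dd_intro[OF ot])
    show "\<forall>e\<in>ET. X e \<subseteq> verts D"
    proof
      fix e assume "e \<in> ET"
      have "e \<in> ET1 \<Longrightarrow> X1 e \<subseteq> verts G" using dd_X[OF d1] by blast
      moreover have "e \<in> ET2 \<Longrightarrow> X2 e \<subseteq> verts H" using dd_X[OF d2] by blast
      ultimately show "X e \<subseteq> verts D" unfolding X_def vD by auto
    qed
    show "\<forall>t\<in>VT. W t \<noteq> {} \<and> W t \<subseteq> verts D"
      unfolding W_def vD VT_def using dd_W[OF d1] dd_W[OF d2] by auto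
    show "\<forall>s\<in>VT. \<forall>t\<in>VT. s \<noteq> t \<longrightarrow> W s \<inter> W t = {}"
    proof (intro ballI impI)
      fix s t assume s: "s \<in> VT" and t: "t \<in> VT" and st: "s \<noteq> t"
      consider "s \<in> VT1" "t \<in> VT1" | "s \<in> VT1" "t \<in> VT2" | "s \<in> VT2" "t \<in> VT1" | "s \<in> VT2" "t \<in> VT2"
        using s t unfolding VT_def by blast
      then show "W s \<inter> W t = {}"
      proof cases
        case 1 then show ?thesis using WonV1 dd_disj[OF d1 _ _ st] by simp
      next
        case 2 then show ?thesis using WonV1 WonV2 W1G W2H vd by blast
      next
        case 3 then show ?thesis using WonV1 WonV2 W1G W2H vd by blast
      next
        case 4 then show ?thesis using WonV2 dd_disj[OF d2 _ _ st] by simp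
      qed
    qed
    have "(\<Union>t\<in>VT. W t) = (\<Union>t\<in>VT1. W1 t) \<union> (\<Union>t\<in>VT2. W2 t)"
      unfolding VT_def using WonV1 WonV2 by auto
    then show "(\<Union>t\<in>VT. W t) = verts D" unfolding vD dd_union[OF d1] dd_union[OF d2] .
  next
    fix u v assume uv: "(u, v) \<in> ET"
    then consider "(u,v) \<in> ET1" | "(u,v) \<in> ET2" "(u,v) \<notin> ET1" | "(u,v) = (r1,r2)" unfolding ET_def by blast
    then show "normal D (X (u, v)) (\<Union>t\<in>{t \<in> VT. (v, t) \<in> ET\<^sup>*}. W t)"
    proof cases
      case 1
      have vV: "v \<in> VT1" using 1 s1 by blast
      have vr: "v \<noteq> r1" using ot_child_nonroot[OF ot1 1] .
      have desc: "{t \<in> VT. (v, t) \<in> ET\<^sup>*} = {t \<in> VT1. (v, t) \<in> ET1\<^sup>*}"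
        using reach1[OF vV vr] m1 unfolding VT_def by blast
      define S where "S = (\<Union>t\<in>{t \<in> VT1. (v, t) \<in> ET1\<^sup>*}. W1 t)"
      have Seq: "(\<Union>t\<in>{t \<in> VT. (v, t) \<in> ET\<^sup>*}. W t) = S" unfolding desc S_def using WonV1 by simp
      have SG: "S \<subseteq> verts G" unfolding S_def using W1G by blast
      have Xeq: "X (u,v) = X1 (u,v)" unfolding X_def using 1 by simp
      have nG: "normal G (X1 (u,v)) S" using dd_normal[OF d1 1] unfolding S_def .
      show ?thesis unfolding Seq Xeq normal_def
      proof (intro allI impI)
        fix ws assume w: "dwalk (del_verts D (X1 (u, v))) ws \<and> hd ws \<in> S \<and> last ws \<in> S"
        have st: "\<forall>i. Suc i < length ws \<longrightarrow> (ws!i, ws!Suc i) \<in> arcs (del_verts D (X1 (u,v)))"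
          using w dwalk_steps by blast
        have ne: "ws \<noteq> []" using w unfolding dwalk_def by blast
        have "last ws \<in> verts G" using w SG by blast
        then have swG: "set ws \<subseteq> verts G" using walk_bwd[OF st ne _ bwdG] by blast
        have "dwalk (del_verts G (X1 (u,v))) ws" using walk_transfer[OF _ swG aG] w by blast
        then have "set ws \<inter> (verts G - (X1 (u,v) \<union> S)) = {}" using nG w unfolding normal_def by blast
        then show "set ws \<inter> (verts D - (X1 (u,v) \<union> S)) = {}" using swG by blast
      qed
    next
      case 2
      have vV: "v \<in> VT2" using 2 s2 by blast
      have desc: "{t \<in> VT. (v, t) \<in> ET\<^sup>*} = {t \<in> VT2. (v, t) \<in> ET2\<^sup>*}"
        using reach2[OF vV] m2 unfolding VT_def by blast
      define S where "S = (\<Union>t\<in>{t \<in> VT2. (v, t) \<in> ET2\<^sup>*}. W2 t)"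
      have Seq: "(\<Union>t\<in>{t \<in> VT. (v, t) \<in> ET\<^sup>*}. W t) = S" unfolding desc S_def using WonV2 by simp
      have SH: "S \<subseteq> verts H" unfolding S_def using W2H by blast
      have Xeq: "X (u,v) = X2 (u,v)" unfolding X_def using 2 by simp
      have nH: "normal H (X2 (u,v)) S" using dd_normal[OF d2 2(1)] unfolding S_def .
      show ?thesis unfolding Seq Xeq normal_def
      proof (intro allI impI)
        fix ws assume w: "dwalk (del_verts D (X2 (u, v))) ws \<and> hd ws \<in> S \<and> last ws \<in> S"
        have st: "\<forall>i. Suc i < length ws \<longrightarrow> (ws!i, ws!Suc i) \<in> arcs (del_verts D (X2 (u,v)))"
          using w dwalk_steps by blast
        have ne: "ws \<noteq> []" using w unfolding dwalk_def by blast
        have "hd ws \<in> verts H" using w SH by blast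
        then have swH: "set ws \<subseteq> verts H" using walk_fwd[OF st ne _ fwdH] by blast
        have "dwalk (del_verts H (X2 (u,v))) ws" using walk_transfer[OF _ swH aH] w by blast
        then have "set ws \<inter> (verts H - (X2 (u,v) \<union> S)) = {}" using nH w unfolding normal_def by blast
        then show "set ws \<inter> (verts D - (X2 (u,v) \<union> S)) = {}" using swH by blast
      qed
    next
      case 3
      then have vr2: "v = r2" by simp
      have desc: "{t \<in> VT. (v, t) \<in> ET\<^sup>*} = VT2"
      proof
        show "{t \<in> VT. (v, t) \<in> ET\<^sup>*} \<subseteq> VT2" using reach2[OF r2V] vr2 by blast
        show "VT2 \<subseteq> {t \<in> VT. (v, t) \<in> ET\<^sup>*}" using ot_reach[OF ot2] m2 vr2 unfolding VT_def by blast
      qed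
      have Seq: "(\<Union>t\<in>{t \<in> VT. (v, t) \<in> ET\<^sup>*}. W t) = verts H"
        unfolding desc using WonV2 dd_union[OF d2] by simp
      have Xeq: "X (u,v) = {}" unfolding X_def using 3 n1 n2 by simp
      show ?thesis unfolding Seq Xeq normal_def
      proof (intro allI impI)
        fix ws assume w: "dwalk (del_verts D {}) ws \<and> hd ws \<in> verts H \<and> last ws \<in> verts H"
        have st: "\<forall>i. Suc i < length ws \<longrightarrow> (ws!i, ws!Suc i) \<in> arcs (del_verts D {})"
          using w dwalk_steps by blast
        have ne: "ws \<noteq> []" using w unfolding dwalk_def by blast
        have swH: "set ws \<subseteq> verts H" using walk_fwd[OF st ne _ fwdH] w by blast
        then show "set ws \<inter> (verts D - ({} \<union> verts H)) = {}" by blast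
      qed
    qed
  qed
  define val where "val = (\<lambda>t. card (W t \<union> (\<Union>e\<in>{e \<in> ET. fst e = t \<or> snd e = t}. X e)))"
  define val1 where "val1 = (\<lambda>t. card (W1 t \<union> (\<Union>e\<in>{e \<in> ET1. fst e = t \<or> snd e = t}. X1 e)))"
  define val2 where "val2 = (\<lambda>t. card (W2 t \<union> (\<Union>e\<in>{e \<in> ET2. fst e = t \<or> snd e = t}. X2 e)))"
  have v1: "val t = val1 t" if t: "t \<in> VT1" for t
  proof -
    have "(\<Union>e\<in>{e \<in> ET. fst e = t \<or> snd e = t}. X e) = (\<Union>e\<in>{e \<in> ET1. fst e = t \<or> snd e = t}. X1 e)"
    proof
      show "(\<Union>e\<in>{e \<in> ET. fst e = t \<or> snd e = t}. X e) \<subseteq> (\<Union>e\<in>{e \<in> ET1. fst e = t \<or> snd e = t}. X1 e)"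
      proof
        fix x assume "x \<in> (\<Union>e\<in>{e \<in> ET. fst e = t \<or> snd e = t}. X e)"
        then obtain e where e: "e \<in> ET" "fst e = t \<or> snd e = t" "x \<in> X e" by blast
        have "e \<notin> ET2"
        proof
          assume "e \<in> ET2"
          then have "fst e \<in> VT2" "snd e \<in> VT2" using s2 by auto
          then show False using e(2) t dj by auto
        qed
        then have "e \<in> ET1" using e(1,3) unfolding ET_def X_def by (auto split: if_splits)
        moreover have "x \<in> X1 e" using \<open>e \<in> ET1\<close> e(3) unfolding X_def by simp
        ultimately show "x \<in> (\<Union>e\<in>{e \<in> ET1. fst e = t \<or> snd e = t}. X1 e)" using e(2) by blast
      qed
      show "(\<Union>e\<in>{e \<in> ET1. fst e = t \<or> snd e = t}. X1 e) \<subseteq> (\<Union>e\<in>{e \<in> ET. fst e = t \<or> snd e = t}. X e)"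
        unfolding X_def ET_def by auto
    qed
    then show ?thesis unfolding val_def val1_def using WonV1[OF t] by simp
  qed
  have v2: "val t = val2 t" if t: "t \<in> VT2" for t
  proof -
    have "(\<Union>e\<in>{e \<in> ET. fst e = t \<or> snd e = t}. X e) = (\<Union>e\<in>{e \<in> ET2. fst e = t \<or> snd e = t}. X2 e)"
    proof
      show "(\<Union>e\<in>{e \<in> ET. fst e = t \<or> snd e = t}. X e) \<subseteq> (\<Union>e\<in>{e \<in> ET2. fst e = t \<or> snd e = t}. X2 e)"
      proof
        fix x assume "x \<in> (\<Union>e\<in>{e \<in> ET. fst e = t \<or> snd e = t}. X e)"
        then obtain e where e: "e \<in> ET" "fst e = t \<or> snd e = t" "x \<in> X e" by blast
        have "e \<notin> ET1"
        proof
          assume "e \<in> ET1"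
          then have "fst e \<in> VT1" "snd e \<in> VT1" using s1 by auto
          then show False using e(2) t dj by auto
        qed
        then have "e \<in> ET2" using e(1,3) unfolding ET_def X_def by (auto split: if_splits)
        moreover have "x \<in> X2 e" using \<open>e \<in> ET2\<close> \<open>e \<notin> ET1\<close> e(3) unfolding X_def by simp
        ultimately show "x \<in> (\<Union>e\<in>{e \<in> ET2. fst e = t \<or> snd e = t}. X2 e)" using e(2) by blast
      qed
      have "\<forall>e\<in>ET2. e \<notin> ET1" using s1 s2 dj by blast
      then show "(\<Union>e\<in>{e \<in> ET2. fst e = t \<or> snd e = t}. X2 e) \<subseteq> (\<Union>e\<in>{e \<in> ET. fst e = t \<or> snd e = t}. X e)"
        unfolding X_def ET_def by auto
    qed
    then show ?thesis unfolding val_def val2_def using WonV2[OF t] by simp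
  qed
  have "val ` VT = val1 ` VT1 \<union> val2 ` VT2"
    unfolding VT_def image_Un using v1 v2 by (metis image_cong)
  moreover have "finite (val1 ` VT1)" "finite (val2 ` VT2)" "val1 ` VT1 \<noteq> {}" "val2 ` VT2 \<noteq> {}"
    using ot_fin[OF ot1] ot_fin[OF ot2] r1V r2V by auto
  ultimately have "Max (val ` VT) = max (Max (val1 ` VT1)) (Max (val2 ` VT2))"
    by (simp add: Max_Un)
  then have "dtd_width VT ET X W = max (dtd_width VT1 ET1 X1 W1) (dtd_width VT2 ET2 X2 W2)"
    unfolding dtd_width_def val_def[symmetric] val1_def[symmetric] val2_def[symmetric] by linarith
  then show ?thesis using D by blast
qed



lemma glue2:
  assumes d1: "dtree_decomp G VT1 ET1 r1 X1 W1" and d2: "dtree_decomp H VT2 ET2 r2 X2 W2"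
    and vd: "verts G \<inter> verts H = {}"
    and vD: "verts D = verts G \<union> verts H"
    and aD: "arcs D \<subseteq> verts D \<times> verts D"
    and noback: "\<forall>a b. (a,b) \<in> arcs D \<longrightarrow> a \<in> verts H \<longrightarrow> b \<in> verts H"
    and aG: "\<forall>a b. (a,b) \<in> arcs D \<longrightarrow> a \<in> verts G \<longrightarrow> b \<in> verts G \<longrightarrow> (a,b) \<in> arcs G"
    and aH: "\<forall>a b. (a,b) \<in> arcs D \<longrightarrow> a \<in> verts H \<longrightarrow> b \<in> verts H \<longrightarrow> (a,b) \<in> arcs H"
  shows "\<exists>VT ET r X W. dtree_decomp D VT ET r X W
           \<and> dtd_width VT ET X W = max (dtd_width VT1 ET1 X1 W1) (dtd_width VT2 ET2 X2 W2)"
proof -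
  have g1: "\<forall>n. (\<lambda>n. n div 2) ((\<lambda>n. 2 * n) n) = (n::nat)" by simp
  have g2: "\<forall>n. (\<lambda>n. n div 2) ((\<lambda>n. 2 * n + 1) n) = (n::nat)" by simp
  note R1 = relabel[where f="\<lambda>n. 2 * n" and g="\<lambda>n. n div 2", OF d1 g1]
  note R2 = relabel[where f="\<lambda>n. 2 * n + 1" and g="\<lambda>n. n div 2", OF d2 g2]
  have dj: "(\<lambda>n. 2 * n) ` VT1 \<inter> (\<lambda>n. 2 * n + 1) ` VT2 = {}" by auto presburger
  show ?thesis using glue[OF conjunct1[OF R1] conjunct1[OF R2] dj vd vD aD noback aG aH]
    conjunct2[OF R1] conjunct2[OF R2] by simp
qed

definition cinv :: "'a digraph \<Rightarrow> nat \<Rightarrow> bool" where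
  "cinv D k \<longleftrightarrow> finite (verts D) \<and> verts D \<noteq> {} \<and> arcs D \<subseteq> verts D \<times> verts D \<and> 1 \<le> k
     \<and> (\<exists>B. bramble (un D) B \<and> border_ge B k)
     \<and> (\<exists>VT ET r X W. dtree_decomp D VT ET r X W \<and> dtd_width VT ET X W + 1 \<le> k)"

lemma cinv_card: "cinv D k \<Longrightarrow> k \<le> card (verts D)"
  unfolding cinv_def using border_card un_fst by metis

lemma cinv_single: "cinv ({v}, {}) 1"
proof -
  have ot: "out_tree {0} {} 0" by (rule ot_intro) auto
  have d: "dtree_decomp ({v}, {}) {0} {} 0 (\<lambda>_. {}) (\<lambda>_. {v})"
    by (rule dd_intro[OF ot]) (auto simp: verts_def)
  have w: "dtd_width {0} {} (\<lambda>_. {}) (\<lambda>_. {v}) = 0" unfolding dtd_width_def by simp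
  have e: "\<exists>VT ET r X W. dtree_decomp ({v}, {}) VT ET r X W \<and> dtd_width VT ET X W + 1 \<le> 1"
    using d w by fastforce
  have b: "\<exists>B. bramble (un ({v}, {})) B \<and> border_ge B 1" using bramble_single[of v] by blast
  show ?thesis unfolding cinv_def using e b by (simp add: verts_def arcs_def)
qed

lemma series_comm: "series_comp G H = series_comp H G"
  unfolding series_comp_def by auto

lemma cinv_union:
  assumes cG: "cinv G kG" and cH: "cinv H kH" and vd: "verts G \<inter> verts H = {}"
  shows "cinv (disj_union G H) (max kG kH)"
proof -
  have fG: "finite (verts G)" "verts G \<noteq> {}" "arcs G \<subseteq> verts G \<times> verts G" "1 \<le> kG"
    using cG unfolding cinv_def by auto
  have fH: "finite (verts H)" "verts H \<noteq> {}" "arcs H \<subseteq> verts H \<times> verts H" "1 \<le> kH"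
    using cH unfolding cinv_def by auto
  obtain BG where bG: "bramble (un G) BG" "border_ge BG kG" using cG unfolding cinv_def by blast
  obtain BH where bH: "bramble (un H) BH" "border_ge BH kH" using cH unfolding cinv_def by blast
  obtain VT1 ET1 r1 X1 W1 where d1: "dtree_decomp G VT1 ET1 r1 X1 W1" "dtd_width VT1 ET1 X1 W1 + 1 \<le> kG"
    using cG unfolding cinv_def by blast
  obtain VT2 ET2 r2 X2 W2 where d2: "dtree_decomp H VT2 ET2 r2 X2 W2" "dtd_width VT2 ET2 X2 W2 + 1 \<le> kH"
    using cH unfolding cinv_def by blast
  let ?D = "disj_union G H"
  have vD: "verts ?D = verts G \<union> verts H" by (rule verts_union)
  have aD: "arcs ?D \<subseteq> verts ?D \<times> verts ?D" unfolding vD arcs_union using fG fH by blast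
  have noback: "\<forall>a b. (a,b) \<in> arcs ?D \<longrightarrow> a \<in> verts H \<longrightarrow> b \<in> verts H"
    unfolding arcs_union using fG(3) fH(3) vd by blast
  have aG: "\<forall>a b. (a,b) \<in> arcs ?D \<longrightarrow> a \<in> verts G \<longrightarrow> b \<in> verts G \<longrightarrow> (a,b) \<in> arcs G"
    unfolding arcs_union using fH(3) vd by blast
  have aH: "\<forall>a b. (a,b) \<in> arcs ?D \<longrightarrow> a \<in> verts H \<longrightarrow> b \<in> verts H \<longrightarrow> (a,b) \<in> arcs H"
    unfolding arcs_union using fG(3) vd by blast
  obtain VT ET r X W where d: "dtree_decomp ?D VT ET r X W"
    "dtd_width VT ET X W = max (dtd_width VT1 ET1 X1 W1) (dtd_width VT2 ET2 X2 W2)"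
    using glue2[OF d1(1) d2(1) vd vD aD noback aG aH] by blast
  have br: "\<exists>B. bramble (un ?D) B \<and> border_ge B (max kG kH)"
  proof (cases "kH \<le> kG")
    case True
    have "fst (un G) \<subseteq> fst (un ?D)" "snd (un G) \<subseteq> snd (un ?D)"
      unfolding un_fst vD using un_snd_mono[of G ?D] unfolding arcs_union by auto
    then have "bramble (un ?D) BG" by (rule bramble_mono[OF bG(1)])
    then show ?thesis using bG(2) True by (metis max.absorb1)
  next
    case False
    have "fst (un H) \<subseteq> fst (un ?D)" "snd (un H) \<subseteq> snd (un ?D)"
      unfolding un_fst vD using un_snd_mono[of H ?D] unfolding arcs_union by auto
    then have "bramble (un ?D) BH" by (rule bramble_mono[OF bH(1)])
    then show ?thesis using bH(2) False by (metis max.absorb2 nle_le)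
  qed
  have "dtd_width VT ET X W + 1 \<le> max kG kH" using d(2) d1(2) d2(2) by simp
  then show ?thesis unfolding cinv_def using fG fH vD aD br d(1) by auto
qed

lemma cinv_order:
  assumes cG: "cinv G kG" and cH: "cinv H kH" and vd: "verts G \<inter> verts H = {}"
  shows "cinv (order_comp G H) (min (card (verts G) + kH) (kG + card (verts H)))"
proof -
  have fG: "finite (verts G)" "verts G \<noteq> {}" "arcs G \<subseteq> verts G \<times> verts G" "1 \<le> kG"
    using cG unfolding cinv_def by auto
  have fH: "finite (verts H)" "verts H \<noteq> {}" "arcs H \<subseteq> verts H \<times> verts H" "1 \<le> kH"
    using cH unfolding cinv_def by auto
  have kG: "kG \<le> card (verts G)" using cinv_card[OF cG] .
  have kH: "kH \<le> card (verts H)" using cinv_card[OF cH] .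
  obtain BG where bG: "bramble (un G) BG" "border_ge BG kG" using cG unfolding cinv_def by blast
  obtain BH where bH: "bramble (un H) BH" "border_ge BH kH" using cH unfolding cinv_def by blast
  obtain VT1 ET1 r1 X1 W1 where d1: "dtree_decomp G VT1 ET1 r1 X1 W1" "dtd_width VT1 ET1 X1 W1 + 1 \<le> kG"
    using cG unfolding cinv_def by blast
  obtain VT2 ET2 r2 X2 W2 where d2: "dtree_decomp H VT2 ET2 r2 X2 W2" "dtd_width VT2 ET2 X2 W2 + 1 \<le> kH"
    using cH unfolding cinv_def by blast
  let ?D = "order_comp G H"
  have vD: "verts ?D = verts G \<union> verts H" by (rule verts_order)
  have aD: "arcs ?D \<subseteq> verts ?D \<times> verts ?D" unfolding vD arcs_order using fG fH by blast
  have noback: "\<forall>a b. (a,b) \<in> arcs ?D \<longrightarrow> a \<in> verts H \<longrightarrow> b \<in> verts H"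
    unfolding arcs_order using fG(3) fH(3) vd by blast
  have aG: "\<forall>a b. (a,b) \<in> arcs ?D \<longrightarrow> a \<in> verts G \<longrightarrow> b \<in> verts G \<longrightarrow> (a,b) \<in> arcs G"
    unfolding arcs_order using fH(3) vd by blast
  have aH: "\<forall>a b. (a,b) \<in> arcs ?D \<longrightarrow> a \<in> verts H \<longrightarrow> b \<in> verts H \<longrightarrow> (a,b) \<in> arcs H"
    unfolding arcs_order using fG(3) vd by blast
  obtain VT ET r X W where d: "dtree_decomp ?D VT ET r X W"
    "dtd_width VT ET X W = max (dtd_width VT1 ET1 X1 W1) (dtd_width VT2 ET2 X2 W2)"
    using glue2[OF d1(1) d2(1) vd vD aD noback aG aH] by blast
  have eG: "snd (un G) \<subseteq> snd (un ?D)" using un_snd_mono[of G ?D] unfolding arcs_order by auto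
  have eH: "snd (un H) \<subseteq> snd (un ?D)" using un_snd_mono[of H ?D] unfolding arcs_order by auto
  have cross: "\<forall>a\<in>verts G. \<forall>b\<in>verts H. {a,b} \<in> snd (un ?D)"
    using un_edge[of _ _ ?D] unfolding arcs_order by blast
  have fU: "fst (un ?D) = verts G \<union> verts H" unfolding un_fst vD ..
  have br: "\<exists>B. bramble (un ?D) B \<and> border_ge B (min (card (verts G) + kH) (kG + card (verts H)))"
    using bramble_join[OF bG(1) bH(1) bG(2) bH(2) vd fU eG eH cross] by blast
  have "dtd_width VT ET X W + 1 \<le> min (card (verts G) + kH) (kG + card (verts H))"
    using d(2) d1(2) d2(2) kG kH fG(4) fH(4) by (simp add: max_def min_def)
  moreover have "1 \<le> min (card (verts G) + kH) (kG + card (verts H))" using fG(4) fH(4) by simp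
  ultimately show ?thesis unfolding cinv_def using fG fH vD aD br d(1) by auto
qed

lemma cinv_series:
  assumes cG: "cinv G kG" and cH: "cinv H kH" and vd: "verts G \<inter> verts H = {}"
  shows "cinv (series_comp G H) (min (card (verts G) + kH) (kG + card (verts H)))"
proof -
  have fG: "finite (verts G)" "verts G \<noteq> {}" "arcs G \<subseteq> verts G \<times> verts G" "1 \<le> kG"
    using cG unfolding cinv_def by auto
  have fH: "finite (verts H)" "verts H \<noteq> {}" "arcs H \<subseteq> verts H \<times> verts H" "1 \<le> kH"
    using cH unfolding cinv_def by auto
  obtain BG where bG: "bramble (un G) BG" "border_ge BG kG" using cG unfolding cinv_def by blast
  obtain BH where bH: "bramble (un H) BH" "border_ge BH kH" using cH unfolding cinv_def by blast
  obtain VT1 ET1 r1 X1 W1 where d1: "dtree_decomp G VT1 ET1 r1 X1 W1" "dtd_width VT1 ET1 X1 W1 + 1 \<le> kG"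
    using cG unfolding cinv_def by blast
  obtain VT2 ET2 r2 X2 W2 where d2: "dtree_decomp H VT2 ET2 r2 X2 W2" "dtd_width VT2 ET2 X2 W2 + 1 \<le> kH"
    using cH unfolding cinv_def by blast
  let ?D = "series_comp G H"
  have vD: "verts ?D = verts G \<union> verts H" by (rule verts_series)
  have aD: "arcs ?D \<subseteq> verts ?D \<times> verts ?D" unfolding vD arcs_series using fG fH by blast
  have eG: "snd (un G) \<subseteq> snd (un ?D)" using un_snd_mono[of G ?D] unfolding arcs_series by auto
  have eH: "snd (un H) \<subseteq> snd (un ?D)" using un_snd_mono[of H ?D] unfolding arcs_series by auto
  have cross: "\<forall>a\<in>verts G. \<forall>b\<in>verts H. {a,b} \<in> snd (un ?D)"
    using un_edge[of _ _ ?D] unfolding arcs_series by blast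
  have fU: "fst (un ?D) = verts G \<union> verts H" unfolding un_fst vD ..
  have br: "\<exists>B. bramble (un ?D) B \<and> border_ge B (min (card (verts G) + kH) (kG + card (verts H)))"
    using bramble_join[OF bG(1) bH(1) bG(2) bH(2) vd fU eG eH cross] by blast
  have vd': "verts H \<inter> verts G = {}" using vd by blast
  obtain XA WA where dA: "dtree_decomp ?D VT1 ET1 r1 XA WA"
    "dtd_width VT1 ET1 XA WA \<le> dtd_width VT1 ET1 X1 W1 + card (verts H)"
    using series_dd[OF d1(1) vd fH(3) fG(1) fH(1)] by blast
  obtain XB WB where dB: "dtree_decomp (series_comp H G) VT2 ET2 r2 XB WB"
    "dtd_width VT2 ET2 XB WB \<le> dtd_width VT2 ET2 X2 W2 + card (verts G)"
    using series_dd[OF d2(1) vd' fG(3) fH(1) fG(1)] by blast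
  have dec: "\<exists>VT ET r X W. dtree_decomp ?D VT ET r X W
      \<and> dtd_width VT ET X W + 1 \<le> min (card (verts G) + kH) (kG + card (verts H))"
  proof (cases "kG + card (verts H) \<le> card (verts G) + kH")
    case True
    have "dtd_width VT1 ET1 XA WA + 1 \<le> min (card (verts G) + kH) (kG + card (verts H))"
      using dA(2) d1(2) True by simp
    then show ?thesis using dA(1) by blast
  next
    case False
    have "dtd_width VT2 ET2 XB WB + 1 \<le> min (card (verts G) + kH) (kG + card (verts H))"
      using dB(2) d2(2) False by simp
    then show ?thesis using dB(1) series_comm[of H G] by metis
  qed
  have "1 \<le> min (card (verts G) + kH) (kG + card (verts H))" using fG(4) fH(4) by simp
  then show ?thesis unfolding cinv_def using fG fH vD aD br dec by auto
qed

lemma cograph_cinv: "dcograph D \<Longrightarrow> \<exists>k. cinv D k"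
proof (induction rule: dcograph.induct)
  case (single v) show ?case by (rule exI[of _ 1], rule cinv_single)
next
  case (union G H) then show ?case using cinv_union unfolding vdisjoint_def by blast
next
  case (series G H) then show ?case using cinv_series unfolding vdisjoint_def by blast
next
  case (order G H) then show ?case using cinv_order unfolding vdisjoint_def by blast
qed

theorem lemma4p11:
  fixes G H :: "'a digraph"
  assumes "dcograph G" and "dcograph H" and "vdisjoint G H"
  shows "tw (un (order_comp G H)) > dtw (order_comp G H)"
proof -
  obtain kG where cG: "cinv G kG" using cograph_cinv[OF assms(1)] by blast
  obtain kH where cH: "cinv H kH" using cograph_cinv[OF assms(2)] by blast
  have vd: "verts G \<inter> verts H = {}" using assms(3) unfolding vdisjoint_def .
  have fG: "finite (verts G)" "verts G \<noteq> {}" "arcs G \<subseteq> verts G \<times> verts G" "1 \<le> kG"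
    using cG unfolding cinv_def by auto
  have fH: "finite (verts H)" "verts H \<noteq> {}" "arcs H \<subseteq> verts H \<times> verts H" "1 \<le> kH"
    using cH unfolding cinv_def by auto
  have kG: "kG \<le> card (verts G)" using cinv_card[OF cG] .
  have kH: "kH \<le> card (verts H)" using cinv_card[OF cH] .
  have cardH: "1 \<le> card (verts H)" using fH(1,2) by (simp add: Suc_leI card_gt_0_iff)
  obtain BG where bG: "bramble (un G) BG" "border_ge BG kG" using cG unfolding cinv_def by blast
  obtain BH where bH: "bramble (un H) BH" "border_ge BH kH" using cH unfolding cinv_def by blast
  obtain VT1 ET1 r1 X1 W1 where d1: "dtree_decomp G VT1 ET1 r1 X1 W1" "dtd_width VT1 ET1 X1 W1 + 1 \<le> kG"
    using cG unfolding cinv_def by blast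
  obtain VT2 ET2 r2 X2 W2 where d2: "dtree_decomp H VT2 ET2 r2 X2 W2" "dtd_width VT2 ET2 X2 W2 + 1 \<le> kH"
    using cH unfolding cinv_def by blast
  let ?D = "order_comp G H"
  have vD: "verts ?D = verts G \<union> verts H" by (rule verts_order)
  have aD: "arcs ?D \<subseteq> verts ?D \<times> verts ?D" unfolding vD arcs_order using fG fH by blast
  have noback: "\<forall>a b. (a,b) \<in> arcs ?D \<longrightarrow> a \<in> verts H \<longrightarrow> b \<in> verts H"
    unfolding arcs_order using fG(3) fH(3) vd by blast
  have aG: "\<forall>a b. (a,b) \<in> arcs ?D \<longrightarrow> a \<in> verts G \<longrightarrow> b \<in> verts G \<longrightarrow> (a,b) \<in> arcs G"
    unfolding arcs_order using fH(3) vd by blast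
  have aH: "\<forall>a b. (a,b) \<in> arcs ?D \<longrightarrow> a \<in> verts H \<longrightarrow> b \<in> verts H \<longrightarrow> (a,b) \<in> arcs H"
    unfolding arcs_order using fG(3) vd by blast
  obtain VT ET r X W where d: "dtree_decomp ?D VT ET r X W"
    "dtd_width VT ET X W = max (dtd_width VT1 ET1 X1 W1) (dtd_width VT2 ET2 X2 W2)"
    using glue2[OF d1(1) d2(1) vd vD aD noback aG aH] by blast
  have up: "dtw ?D \<le> max (dtd_width VT1 ET1 X1 W1) (dtd_width VT2 ET2 X2 W2)"
    using dtw_upper[OF d(1)] d(2) by simp
  have eG: "snd (un G) \<subseteq> snd (un ?D)" using un_snd_mono[of G ?D] unfolding arcs_order by auto
  have eH: "snd (un H) \<subseteq> snd (un ?D)" using un_snd_mono[of H ?D] unfolding arcs_order by auto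
  have cross: "\<forall>a\<in>verts G. \<forall>b\<in>verts H. {a,b} \<in> snd (un ?D)"
    using un_edge[of _ _ ?D] unfolding arcs_order by blast
  have fU: "fst (un ?D) = verts G \<union> verts H" unfolding un_fst vD ..
  obtain B where br: "bramble (un ?D) B" "border_ge B (min (card (verts G) + kH) (kG + card (verts H)))"
    using bramble_join[OF bG(1) bH(1) bG(2) bH(2) vd fU eG eH cross] by blast
  have finU: "finite (fst (un ?D))" using fU fG(1) fH(1) by simp
  have edU: "\<forall>e\<in>snd (un ?D). e \<subseteq> fst (un ?D)" using un_edge_sub[OF aD] .
  have low: "min (card (verts G) + kH) (kG + card (verts H)) - 1 \<le> tw (un ?D)"
    using tw_lower[OF finU edU br(1) br(2)] .
  have "max (dtd_width VT1 ET1 X1 W1) (dtd_width VT2 ET2 X2 W2) < min (card (verts G) + kH) (kG + card (verts H)) - 1"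
    using d1(2) d2(2) kG kH fG(4) fH(4) cardH unfolding max_def min_def by auto
  then show ?thesis using up low by linarith
qed

end
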